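(* For all $g,h\in C^\infty_c(\mathbb R^d)$, $k\in\mathbb R^d\setminus\{0\}$ and $\varepsilon>0$, $$\big|\langle h,(\varepsilon+ik\cdot v)^{-1}g\rangle\big|\lesssim|k|^{-1}\big(\|\langle\nabla\rangle h\|\,\|g\|+\|h\|\,\|\nabla g\|\big),$$ where $\langle h,f\rangle=\int_{\mathbb R^d}\overline{h}f\,dv$, $\|\cdot\|$ is the $L^2(\mathbb R^d)$ norm, and the constant depends only on $d$.
   Context: $\|\langle\nabla\rangle h\|$ denotes the $H^1(\mathbb R^d)$ norm of $h$, i.e. $\|(1-\Delta)^{1/2}h\|_{L^2}$. *)

theory Defs
  imports "HOL-Analysis.Analysis"
begin

definition partial_deriv :: "('a::euclidean_space \<Rightarrow> complex) \<Rightarrow> 'a \<Rightarrow> 'a \<Rightarrow> complex" where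
  "partial_deriv f b v = frechet_derivative f (at v) b"

fun Ck :: "nat \<Rightarrow> ('a::euclidean_space \<Rightarrow> complex) \<Rightarrow> bool" where
  "Ck 0 f = continuous_on UNIV f"
| "Ck (Suc n) f = ((\<forall>v. f differentiable (at v)) \<and> (\<forall>b\<in>Basis. Ck n (partial_deriv f b)))"

definition smooth :: "('a::euclidean_space \<Rightarrow> complex) \<Rightarrow> bool" where
  "smooth f = (\<forall>n. Ck n f)"

definition Cc_inf :: "('a::euclidean_space \<Rightarrow> complex) \<Rightarrow> bool" where
  "Cc_inf f = (smooth f \<and> compact (closure {v. f v \<noteq> 0}))"

definition L2norm :: "('a::euclidean_space \<Rightarrow> complex) \<Rightarrow> real" where
  "L2norm f = sqrt (\<integral>v. (cmod (f v))^2 \<partial>lborel)"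

definition grad_L2norm :: "('a::euclidean_space \<Rightarrow> complex) \<Rightarrow> real" where
  "grad_L2norm f = sqrt (\<integral>v. (\<Sum>b\<in>Basis. (cmod (partial_deriv f b v))^2) \<partial>lborel)"

text \<open>H^1 norm \<parallel>\<langle>\<nabla>\<rangle>h\<parallel> = \<parallel>(1-\<Delta>)^(1/2) h\<parallel>, which by Plancherel equals
  (\<parallel>h\<parallel>^2 + \<parallel>\<nabla>h\<parallel>^2)^(1/2).\<close>
definition H1norm :: "('a::euclidean_space \<Rightarrow> complex) \<Rightarrow> real" where
  "H1norm f = sqrt ((L2norm f)^2 + (grad_L2norm f)^2)"

definition resolvent_pairing :: "('a::euclidean_space \<Rightarrow> complex) \<Rightarrow> real \<Rightarrow> 'a \<Rightarrow> ('a \<Rightarrow> complex) \<Rightarrow> complex" where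
  "resolvent_pairing h \<epsilon> k g = (\<integral>v. cnj (h v) * g v / (complex_of_real \<epsilon> + \<i> * complex_of_real (k \<bullet> v)) \<partial>lborel)"

end

theory Submission
  imports Defs
begin

lemma quad_cs:
  fixes a b c :: real
  assumes "\<And>t. 0 \<le> a - 2*t*b + t^2*c"
  shows "b \<le> sqrt a * sqrt c"
proof -
  have a0: "0 \<le> a" using assms[of 0] by simp
  have c0: "0 \<le> c"
  proof (rule ccontr)
    assume "\<not> 0 \<le> c"
    hence c: "c < 0" by simp
    define t where "t = (\<bar>a\<bar> + 2*\<bar>b\<bar> + 1) / (-c) + 1"
    have t1: "t \<ge> 1" using c by (simp add: t_def divide_nonneg_neg)
    have "t^2 * (-c) = t * (t * (-c))" by (simp add: power2_eq_square)
    also have "t * (-c) \<ge> \<bar>a\<bar> + 2*\<bar>b\<bar> + 1" using c by (simp add: t_def field_simps)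
    hence "t * (t * (-c)) \<ge> t * (\<bar>a\<bar> + 2*\<bar>b\<bar> + 1)" using t1 by (intro mult_left_mono) auto
    finally have "t^2*(-c) \<ge> t * (\<bar>a\<bar> + 2*\<bar>b\<bar> + 1)" .
    moreover have "t * (\<bar>a\<bar> + 2*\<bar>b\<bar> + 1) = t*\<bar>a\<bar> + 2*(t*\<bar>b\<bar>) + t" by (simp add: algebra_simps)
    moreover have "1*\<bar>a\<bar> \<le> t*\<bar>a\<bar>" using t1 by (intro mult_right_mono) auto
    moreover have "t*(-b) \<le> t*\<bar>b\<bar>" using t1 by (intro mult_left_mono) auto
    moreover have "0 \<le> a - 2*t*b + t^2*c" by (rule assms)
    ultimately show False using t1 abs_ge_self[of a] by (simp add: algebra_simps)
  qed
  show ?thesis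
  proof (cases "b \<le> 0")
    case True thus ?thesis using a0 c0 by (smt (verit) mult_nonneg_nonneg real_sqrt_ge_zero)
  next
    case False
    hence b: "b > 0" by simp
    show ?thesis
    proof (cases "c = 0")
      case True
      have "0 \<le> a - 2*((a+1)/(2*b))*b" using assms[of "(a+1)/(2*b)"] True by simp
      also have "\<dots> = -1" using b by (simp add: field_simps)
      finally show ?thesis by simp
    next
      case False
      hence c: "c > 0" using c0 by simp
      have "0 \<le> a - 2*(b/c)*b + (b/c)^2*c" by (rule assms)
      also have "\<dots> = a - b^2/c" using c by (simp add: field_simps power2_eq_square)
      finally have "b^2 \<le> a * c" using c by (simp add: field_simps)
      hence "sqrt (b^2) \<le> sqrt (a*c)" by (rule real_sqrt_le_mono)
      thus ?thesis using b by (simp add: real_sqrt_mult)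
    qed
  qed
qed

lemma cs_hk:
  fixes f g :: "real \<Rightarrow> real"
  assumes "(\<lambda>x. (f x)^2) integrable_on S" "(\<lambda>x. (g x)^2) integrable_on S" "(\<lambda>x. f x * g x) integrable_on S"
  shows "integral S (\<lambda>x. f x * g x) \<le> sqrt (integral S (\<lambda>x. (f x)^2)) * sqrt (integral S (\<lambda>x. (g x)^2))"
proof (rule quad_cs)
  fix t :: real
  have "(\<lambda>x. (f x)^2 - 2*t*(f x * g x) + t^2 * (g x)^2) integrable_on S"
    using assms integrable_on_cmult_left[OF assms(3), of "2*t"] integrable_on_cmult_left[OF assms(2), of "t^2"]
    by (intro integrable_add integrable_diff) auto
  have "integral S (\<lambda>x. (f x)^2 - 2*t*(f x * g x) + t^2 * (g x)^2)
      = integral S (\<lambda>x. (f x)^2) - 2*t*integral S (\<lambda>x. f x * g x) + t^2 * integral S (\<lambda>x. (g x)^2)"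
    using assms integrable_on_cmult_left[OF assms(3), of "2*t"] integrable_on_cmult_left[OF assms(2), of "t^2"]
    by (simp add: integral_add integral_diff integrable_add integrable_diff)
  moreover have "integral S (\<lambda>x. (f x)^2 - 2*t*(f x * g x) + t^2 * (g x)^2) \<ge> 0"
  proof -
    have e: "(\<lambda>x. (f x)^2 - 2*t*(f x * g x) + t^2 * (g x)^2) = (\<lambda>x. (f x - t * g x)^2)"
      by (rule ext) (simp add: power2_eq_square algebra_simps)
    show ?thesis unfolding e by (rule integral_nonneg) (use \<open>(\<lambda>x. (f x)^2 - 2*t*(f x * g x) + t^2 * (g x)^2) integrable_on S\<close> e in auto)
  qed
  ultimately show "0 \<le> integral S (\<lambda>x. (f x)^2) - 2*t*integral S (\<lambda>x. f x * g x) + t^2 * integral S (\<lambda>x. (g x)^2)"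
    by simp
qed


lemma csupp_int:
  fixes q :: "real \<Rightarrow> 'b::euclidean_space"
  assumes c: "continuous_on UNIV q" and s: "\<And>x. M \<le> \<bar>x\<bar> \<Longrightarrow> q x = 0"
  shows "integrable lborel q" "integral\<^sup>L lborel q = integral {-M..M} q"
    "q integrable_on UNIV" "integral UNIV q = integral {-M..M} q"
proof -
  have e: "q = (\<lambda>x. indicator {-M..M} x *\<^sub>R q x)"
  proof (rule ext)
    fix x show "q x = indicator {-M..M} x *\<^sub>R q x"
      using s[of x] by (cases "x \<in> {-M..M}") (auto simp: indicator_def)
  qed
  have e2: "(\<lambda>x. if x \<in> {-M..M} then q x else 0) = q"
  proof (rule ext)
    fix x show "(if x \<in> {-M..M} then q x else 0) = q x"
      using s[of x] by auto
  qed
  have i: "integrable lborel (\<lambda>x. indicator {-M..M} x *\<^sub>R q x)"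
    by (rule borel_integrable_compact) (auto intro: continuous_on_subset[OF c])
  thus i': "integrable lborel q" using e by simp
  have u: "integral UNIV q = integral {-M..M} q"
    using Henstock_Kurzweil_Integration.integral_restrict_UNIV[of "{-M..M}" q] e2 by simp
  thus "integral UNIV q = integral {-M..M} q" .
  show "q integrable_on UNIV" using integrable_on_lborel[OF i'] .
  show "integral\<^sup>L lborel q = integral {-M..M} q" using integral_lborel[OF i'] u by simp
qed

lemma sup_bound:
  fixes H H' :: "real \<Rightarrow> complex"
  assumes dH: "\<And>s. (H has_vector_derivative H' s) (at s)" and cH': "continuous_on UNIV H'"
    and sH: "\<And>s. M \<le> \<bar>s\<bar> \<Longrightarrow> H s = 0"
  shows "(cmod (H s))^2 \<le> 2 * integral {-M..M} (\<lambda>x. cmod (H x) * cmod (H' x))"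
proof -
  have cH: "continuous_on UNIV H"
    using dH by (intro continuous_at_imp_continuous_on ballI has_vector_derivative_continuous) auto
  have cf: "continuous_on UNIV (\<lambda>x. cmod (H x) * cmod (H' x))"
    by (intro continuous_intros cH cH')
  have int: "(\<lambda>x. cmod (H x) * cmod (H' x)) integrable_on {a..b}" for a b
    by (rule integrable_continuous_real) (rule continuous_on_subset[OF cf], auto)
  have nn: "0 \<le> integral {a..b} (\<lambda>x. cmod (H x) * cmod (H' x))" for a b
    by (rule Henstock_Kurzweil_Integration.integral_nonneg[OF int]) auto
  show ?thesis
  proof (cases "M \<le> \<bar>s\<bar>")
    case True thus ?thesis using sH[OF True] nn[of "-M" M] by simp
  next
    case False
    hence s: "-M \<le> s" "s \<le> M" by auto
    have ftc: "((\<lambda>x. cnj (H x) * H' x + cnj (H' x) * H x) has_integral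
        (cnj (H s) * H s - cnj (H (-M)) * H (-M))) {-M..s}"
    proof (rule fundamental_theorem_of_calculus)
      show "-M \<le> s" using s by simp
      fix x assume "x \<in> {-M..s}"
      show "((\<lambda>x. cnj (H x) * H x) has_vector_derivative cnj (H x) * H' x + cnj (H' x) * H x) (at x within {-M..s})"
        by (rule has_vector_derivative_at_within, rule has_vector_derivative_mult[OF has_vector_derivative_cnj[OF dH] dH])
    qed
    have HM: "H (-M) = 0" using sH[of "-M"] s by simp
    have e: "cnj (H s) * H s = complex_of_real ((cmod (H s))^2)"
      by (subst complex_norm_square) (simp add: mult.commute)
    have cg: "continuous_on UNIV (\<lambda>x. cnj (H x) * H' x + cnj (H' x) * H x)"
      by (intro continuous_intros cH cH')
    have "(cmod (H s))^2 = cmod (integral {-M..s} (\<lambda>x. cnj (H x) * H' x + cnj (H' x) * H x))"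
      using integral_unique[OF ftc] HM e by (simp add: norm_power)
    also have "\<dots> \<le> integral {-M..s} (\<lambda>x. 2 * (cmod (H x) * cmod (H' x)))"
    proof (rule integral_norm_bound_integral)
      show "(\<lambda>x. cnj (H x) * H' x + cnj (H' x) * H x) integrable_on {-M..s}"
        by (rule integrable_continuous_real) (rule continuous_on_subset[OF cg], auto)
      show "(\<lambda>x. 2 * (cmod (H x) * cmod (H' x))) integrable_on {-M..s}"
        by (rule integrable_on_mult_right[OF int])
      fix x show "cmod (cnj (H x) * H' x + cnj (H' x) * H x) \<le> 2 * (cmod (H x) * cmod (H' x))"
        by (rule order_trans[OF norm_triangle_ineq]) (simp add: norm_mult)
    qed
    also have "\<dots> \<le> integral {-M..M} (\<lambda>x. 2 * (cmod (H x) * cmod (H' x)))"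
      using s by (intro integral_subset_le integrable_on_mult_right[OF int]) auto
    also have "\<dots> = 2 * integral {-M..M} (\<lambda>x. cmod (H x) * cmod (H' x))"
      by simp
    finally show ?thesis .
  qed
qed

lemma diff_bound:
  fixes G G' :: "real \<Rightarrow> complex"
  assumes dG: "\<And>s. (G has_vector_derivative G' s) (at s)" and cG': "continuous_on UNIV G'"
    and sG': "\<And>s. M \<le> \<bar>s\<bar> \<Longrightarrow> G' s = 0" and x: "0 \<le> x"
  shows "cmod (G x - G (-x)) \<le> sqrt (2*x) * sqrt (integral UNIV (\<lambda>s. (cmod (G' s))^2))"
proof -
  have cf: "continuous_on UNIV (\<lambda>s. (cmod (G' s))^2)" by (intro continuous_intros cG')
  have iU: "(\<lambda>s. (cmod (G' s))^2) integrable_on UNIV"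
    by (rule csupp_int(3)[OF cf, of M]) (use sG' in auto)
  have ftc: "(G' has_integral (G x - G (-x))) {-x..x}"
    by (rule fundamental_theorem_of_calculus) (use x in \<open>auto intro: has_vector_derivative_at_within dG\<close>)
  have "cmod (G x - G (-x)) = cmod (integral {-x..x} G')" using integral_unique[OF ftc] by simp
  also have "\<dots> \<le> integral {-x..x} (\<lambda>s. 1 * cmod (G' s))"
    by (rule integral_norm_bound_integral)
       (auto intro!: integrable_continuous_real continuous_on_subset[OF cG'] continuous_intros)
  also have "\<dots> \<le> sqrt (integral {-x..x} (\<lambda>s. 1^2)) * sqrt (integral {-x..x} (\<lambda>s. (cmod (G' s))^2))"
    by (rule cs_hk) (auto intro!: integrable_continuous_real continuous_on_subset[OF cG'] continuous_intros)
  also have "integral {-x..x} (\<lambda>s. (1::real)^2) = 2*x" using x by simp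
  also have "integral {-x..x} (\<lambda>s. (cmod (G' s))^2) \<le> integral UNIV (\<lambda>s. (cmod (G' s))^2)"
    by (rule integral_subset_le) (auto intro!: iU integrable_continuous_real continuous_on_subset[OF cf])
  hence "sqrt (integral {-x..x} (\<lambda>s. (cmod (G' s))^2)) \<le> sqrt (integral UNIV (\<lambda>s. (cmod (G' s))^2))"
    by simp
  hence "sqrt (2*x) * sqrt (integral {-x..x} (\<lambda>s. (cmod (G' s))^2)) \<le> sqrt (2*x) * sqrt (integral UNIV (\<lambda>s. (cmod (G' s))^2))"
    using x by (intro mult_left_mono) auto
  finally show ?thesis .
qed

lemma outer_bound:
  fixes \<Phi> :: "real \<Rightarrow> complex" and g :: "real \<Rightarrow> real"
  assumes c\<Phi>: "continuous_on {R..M1} \<Phi>" and cg: "continuous_on {R..M1} g"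
    and R: "0 < R" and RM: "R \<le> M1" and C: "0 \<le> C"
    and bnd: "\<And>x. x \<in> {R..M1} \<Longrightarrow> cmod (\<Phi> x) \<le> C * (g x * (1/x))"
  shows "cmod (integral {R..M1} \<Phi>) \<le> C * sqrt (integral {R..M1} (\<lambda>x. (g x)^2)) * sqrt (1/R)"
proof -
  have cinv: "continuous_on {R..M1} (\<lambda>x::real. 1/x)"
    using R by (intro continuous_intros) auto
  have "cmod (integral {R..M1} \<Phi>) \<le> integral {R..M1} (\<lambda>x. C * (g x * (1/x)))"
  proof (rule integral_norm_bound_integral)
    show "\<Phi> integrable_on {R..M1}" by (rule integrable_continuous_real[OF c\<Phi>])
    show "(\<lambda>x. C * (g x * (1/x))) integrable_on {R..M1}"
      by (intro integrable_continuous_real continuous_on_mult continuous_on_const cg cinv)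
    fix x assume "x \<in> {R..M1}" thus "cmod (\<Phi> x) \<le> C * (g x * (1/x))" by (rule bnd)
  qed
  also have "\<dots> = C * integral {R..M1} (\<lambda>x. g x * (1/x))"
    by (rule Henstock_Kurzweil_Integration.integral_mult_right)
  finally have s1: "cmod (integral {R..M1} \<Phi>) \<le> C * integral {R..M1} (\<lambda>x. g x * (1/x))" .
  have s2: "integral {R..M1} (\<lambda>x. g x * (1/x)) \<le> sqrt (integral {R..M1} (\<lambda>x. (g x)^2)) * sqrt (integral {R..M1} (\<lambda>x. (1/x)^2))"
  proof (rule cs_hk)
    show "(\<lambda>x. (g x)^2) integrable_on {R..M1}"
      by (rule integrable_continuous_real, rule continuous_on_power[OF cg])
    show "(\<lambda>x. (1/x)^2) integrable_on {R..M1}"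
      by (rule integrable_continuous_real, rule continuous_on_power[OF cinv])
    show "(\<lambda>x. g x * (1/x)) integrable_on {R..M1}"
      by (rule integrable_continuous_real, rule continuous_on_mult[OF cg cinv])
  qed
  have s3: "integral {R..M1} (\<lambda>x. (1/x)^2) = 1/R - 1/M1"
  proof -
    have "((\<lambda>x. (1/x)^2) has_integral ((-1/M1) - (-1/R))) {R..M1}"
    proof (rule fundamental_theorem_of_calculus)
      show "R \<le> M1" by fact
      fix x assume x: "x \<in> {R..M1}"
      hence "x \<noteq> 0" using R by auto
      hence "((\<lambda>x. -1/x) has_real_derivative (1/x)^2) (at x)"
        by (auto intro!: derivative_eq_intros simp: power2_eq_square field_simps)
      thus "((\<lambda>x. -1/x) has_vector_derivative (1/x)^2) (at x within {R..M1})"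
        by (simp add: has_real_derivative_iff_has_vector_derivative has_vector_derivative_at_within)
    qed
    thus ?thesis by (simp add: integral_unique)
  qed
  have s4: "sqrt (1/R - 1/M1) \<le> sqrt (1/R)" using R RM by simp
  have s5: "integral {R..M1} (\<lambda>x. g x * (1/x)) \<le> sqrt (integral {R..M1} (\<lambda>x. (g x)^2)) * sqrt (1/R)"
  proof -
    have "sqrt (integral {R..M1} (\<lambda>x. (g x)^2)) * sqrt (1/R - 1/M1) \<le> sqrt (integral {R..M1} (\<lambda>x. (g x)^2)) * sqrt (1/R)"
      by (rule mult_left_mono[OF s4], rule real_sqrt_ge_zero, rule Henstock_Kurzweil_Integration.integral_nonneg)
         (auto intro: integrable_continuous_real continuous_on_power[OF cg])
    thus ?thesis using s2 unfolding s3 by linarith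
  qed
  show ?thesis using s1 mult_left_mono[OF s5 C] by (simp add: mult.assoc)
qed

lemma inner_bound:
  fixes \<Phi> :: "real \<Rightarrow> complex"
  assumes c\<Phi>: "continuous_on {-R..R} \<Phi>" and R: "0 \<le> R" and C: "0 \<le> C"
    and bnd: "\<And>x. x \<in> {0..R} \<Longrightarrow> cmod (\<Phi> x + \<Phi> (-x)) \<le> C * x powr (-1/2)"
  shows "cmod (integral {-R..R} \<Phi>) \<le> C * 2 * sqrt R"
proof -
  have i1: "\<Phi> integrable_on {-R..R}" by (rule integrable_continuous_real[OF c\<Phi>])
  have c2: "continuous_on {0..R} (\<lambda>x. \<Phi> (-x))"
    by (rule continuous_on_compose2[OF c\<Phi>]) (auto intro!: continuous_intros)
  have c3: "continuous_on {0..R} \<Phi>" by (rule continuous_on_subset[OF c\<Phi>]) auto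
  have "integral {-R..R} \<Phi> = integral {-R..0} \<Phi> + integral {0..R} \<Phi>"
    using R i1 by (simp add: Henstock_Kurzweil_Integration.integral_combine)
  also have "integral {-R..0} \<Phi> = integral {0..R} (\<lambda>x. \<Phi> (-x))"
    using Henstock_Kurzweil_Integration.integral_reflect_real[of 0 "-R" \<Phi>] by simp
  also have "integral {0..R} (\<lambda>x. \<Phi> (-x)) + integral {0..R} \<Phi> = integral {0..R} (\<lambda>x. \<Phi> x + \<Phi> (-x))"
    using c2 c3 by (subst Henstock_Kurzweil_Integration.integral_add) (auto intro!: integrable_continuous_real)
  finally have e: "integral {-R..R} \<Phi> = integral {0..R} (\<lambda>x. \<Phi> x + \<Phi> (-x))" .
  have hp: "((\<lambda>x. x powr (-1/2)) has_integral (R powr (1/2) / (1/2))) {0..R}"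
    using has_integral_powr_from_0[of "-1/2" R] R by simp
  have "cmod (integral {0..R} (\<lambda>x. \<Phi> x + \<Phi> (-x))) \<le> integral {0..R} (\<lambda>x. C * x powr (-1/2))"
  proof (rule integral_norm_bound_integral)
    show "(\<lambda>x. \<Phi> x + \<Phi> (-x)) integrable_on {0..R}"
      by (intro integrable_continuous_real continuous_on_add c2 c3)
    show "(\<lambda>x. C * x powr (-1/2)) integrable_on {0..R}"
      by (rule integrable_on_mult_right[OF has_integral_integrable[OF hp]])
    fix x assume "x \<in> {0..R}" thus "cmod (\<Phi> x + \<Phi> (-x)) \<le> C * x powr (-1/2)" by (rule bnd)
  qed
  also have "\<dots> = C * (R powr (1/2) / (1/2))" using integral_unique[OF hp] by simp
  also have "\<dots> = C * 2 * sqrt R" using R by (simp add: powr_half_sqrt)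
  finally show ?thesis using e by simp
qed


lemma oneD_hk:
  fixes H G H' G' :: "real \<Rightarrow> complex" and M \<delta> \<rho> :: real
  assumes dH: "\<And>s. (H has_vector_derivative H' s) (at s)"
    and dG: "\<And>s. (G has_vector_derivative G' s) (at s)"
    and cH': "continuous_on UNIV H'" and cG': "continuous_on UNIV G'"
    and sH: "\<And>s. M \<le> \<bar>s\<bar> \<Longrightarrow> H s = 0" and sG: "\<And>s. M \<le> \<bar>s\<bar> \<Longrightarrow> G s = 0"
    and sH': "\<And>s. M \<le> \<bar>s\<bar> \<Longrightarrow> H' s = 0" and sG': "\<And>s. M \<le> \<bar>s\<bar> \<Longrightarrow> G' s = 0"
    and \<delta>: "0 < \<delta>" and \<rho>: "0 < \<rho>"
  shows "cmod (integral UNIV (\<lambda>s. cnj (H s) * G s / (complex_of_real \<delta> + \<i> * complex_of_real s)))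
    \<le> 4 * sqrt (2 * integral UNIV (\<lambda>x. cmod (H x) * cmod (H' x))) * sqrt (2 * integral UNIV (\<lambda>x. cmod (G x) * cmod (G' x)))
     + 2 * sqrt (2 * integral UNIV (\<lambda>x. cmod (H x) * cmod (H' x))) * sqrt (integral UNIV (\<lambda>x. (cmod (G x))^2)) / \<rho>
     + 3 * \<rho> * (sqrt (2 * integral UNIV (\<lambda>x. cmod (H x) * cmod (H' x))) * sqrt (integral UNIV (\<lambda>x. (cmod (G' x))^2))
                + sqrt (2 * integral UNIV (\<lambda>x. cmod (G x) * cmod (G' x))) * sqrt (integral UNIV (\<lambda>x. (cmod (H' x))^2)))"
    (is "_ \<le> 4 * ?SH * ?SG + 2 * ?SH * ?NG / \<rho> + 3 * \<rho> * (?SH * ?NG' + ?SG * ?NH')")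
proof -
  define R where "R = \<rho>^2"
  have R: "0 < R" using \<rho> by (simp add: R_def)
  define M1 where "M1 = max M R + 1"
  have RM1: "R \<le> M1" and M1: "M \<le> M1" by (auto simp: M1_def)
  have sH1: "\<And>s. M1 \<le> \<bar>s\<bar> \<Longrightarrow> H s = 0" using sH M1 by auto
  have sG1: "\<And>s. M1 \<le> \<bar>s\<bar> \<Longrightarrow> G s = 0" using sG M1 by auto
  have sH1': "\<And>s. M1 \<le> \<bar>s\<bar> \<Longrightarrow> H' s = 0" using sH' M1 by auto
  have sG1': "\<And>s. M1 \<le> \<bar>s\<bar> \<Longrightarrow> G' s = 0" using sG' M1 by auto
  have cH: "continuous_on UNIV H"
    using dH by (intro continuous_at_imp_continuous_on ballI has_vector_derivative_continuous) auto
  have cG: "continuous_on UNIV G"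
    using dG by (intro continuous_at_imp_continuous_on ballI has_vector_derivative_continuous) auto
  have eAH: "integral UNIV (\<lambda>x. cmod (H x) * cmod (H' x)) = integral {-M1..M1} (\<lambda>x. cmod (H x) * cmod (H' x))"
    by (rule csupp_int(4)) (auto intro!: continuous_intros cH cH' simp: sH1)
  have eAG: "integral UNIV (\<lambda>x. cmod (G x) * cmod (G' x)) = integral {-M1..M1} (\<lambda>x. cmod (G x) * cmod (G' x))"
    by (rule csupp_int(4)) (auto intro!: continuous_intros cG cG' simp: sG1)
  have supH: "cmod (H s) \<le> ?SH" for s
    using sup_bound[where H=H and H'=H' and M=M1 and s=s, OF dH cH' sH1] eAH by (intro real_le_rsqrt) simp
  have supG: "cmod (G s) \<le> ?SG" for s
    using sup_bound[where H=G and H'=G' and M=M1 and s=s, OF dG cG' sG1] eAG by (intro real_le_rsqrt) simp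
  have SH0: "0 \<le> ?SH" using supH[of 0] norm_ge_zero order_trans by blast
  have SG0: "0 \<le> ?SG" using supG[of 0] norm_ge_zero order_trans by blast
  have AH0: "0 \<le> integral UNIV (\<lambda>x. cmod (H x) * cmod (H' x))" using SH0 by simp
  have AG0: "0 \<le> integral UNIV (\<lambda>x. cmod (G x) * cmod (G' x))" using SG0 by simp
  have iGG: "(\<lambda>x. (cmod (G x))^2) integrable_on UNIV"
    by (rule csupp_int(3)[of _ M1]) (auto intro!: continuous_intros cG simp: sG1)
  have NG0: "0 \<le> ?NG" by (rule real_sqrt_ge_zero, rule Henstock_Kurzweil_Integration.integral_nonneg[OF iGG]) auto
  have NG'0: "0 \<le> ?NG'"
    by (rule real_sqrt_ge_zero, rule Henstock_Kurzweil_Integration.integral_nonneg,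
        rule csupp_int(3)[of _ M1]) (auto intro!: continuous_intros cG' simp: sG1')
  have NH'0: "0 \<le> ?NH'"
    by (rule real_sqrt_ge_zero, rule Henstock_Kurzweil_Integration.integral_nonneg,
        rule csupp_int(3)[of _ M1]) (auto intro!: continuous_intros cH' simp: sH1')
  define F where "F s = cnj (H s) * G s" for s
  have cF: "continuous_on UNIV F" unfolding F_def by (intro continuous_intros cH cG)
  have Fb: "cmod (F s) \<le> ?SH * ?SG" for s
    unfolding F_def norm_mult complex_mod_cnj by (intro mult_mono supH supG SH0) auto
  define P where "P s = \<delta> / (\<delta>^2 + s^2)" for s
  define K where "K s = s / (\<delta>^2 + s^2)" for s
  have pos: "0 < \<delta>^2 + s^2" for s using \<delta> by (simp add: add_pos_nonneg)
  have cP: "continuous_on UNIV P" unfolding P_def using pos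
    by (intro continuous_intros) (auto simp: less_imp_neq[symmetric] )
  have cK: "continuous_on UNIV K" unfolding K_def using pos
    by (intro continuous_intros) (auto simp: less_imp_neq[symmetric])
  have wnz: "complex_of_real \<delta> + \<i> * complex_of_real s \<noteq> 0" for s
    using \<delta> by (simp add: complex_eq_iff)
  have zw: "(complex_of_real (P s) - \<i> * complex_of_real (K s)) * (complex_of_real \<delta> + \<i> * complex_of_real s) = 1" for s
    using pos[of s] apply (simp add: complex_eq_iff P_def K_def field_simps power2_eq_square)
    by (metis add_divide_distrib less_irrefl divide_self)
  have pw: "cnj (H s) * G s / (complex_of_real \<delta> + \<i> * complex_of_real s)
      = F s * complex_of_real (P s) - \<i> * (F s * complex_of_real (K s))" for s
  proof -
    have "cnj (H s) * G s / (complex_of_real \<delta> + \<i> * complex_of_real s)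
       = F s * ((complex_of_real (P s) - \<i> * complex_of_real (K s)) * (complex_of_real \<delta> + \<i> * complex_of_real s))
         / (complex_of_real \<delta> + \<i> * complex_of_real s)"
      using zw[of s] by (simp add: F_def)
    also have "\<dots> = F s * (complex_of_real (P s) - \<i> * complex_of_real (K s))"
      using wnz[of s] by simp
    finally show ?thesis by (simp add: algebra_simps)
  qed
  have cw: "continuous_on UNIV (\<lambda>s. F s * complex_of_real (P s) - \<i> * (F s * complex_of_real (K s)))"
    by (intro continuous_intros cF cP cK)
  have cFP: "continuous_on UNIV (\<lambda>s. F s * complex_of_real (P s))" by (intro continuous_intros cF cP)
  have cFK: "continuous_on UNIV (\<lambda>s. F s * complex_of_real (K s))" by (intro continuous_intros cF cK)
  have "integral UNIV (\<lambda>s. cnj (H s) * G s / (complex_of_real \<delta> + \<i> * complex_of_real s))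
      = integral UNIV (\<lambda>s. F s * complex_of_real (P s) - \<i> * (F s * complex_of_real (K s)))"
    by (simp add: pw)
  also have "\<dots> = integral {-M1..M1} (\<lambda>s. F s * complex_of_real (P s) - \<i> * (F s * complex_of_real (K s)))"
    by (rule csupp_int(4)[OF cw]) (simp add: F_def sH1)
  also have "\<dots> = integral {-M1..M1} (\<lambda>s. F s * complex_of_real (P s)) - \<i> * integral {-M1..M1} (\<lambda>s. F s * complex_of_real (K s))"
  proof -
    have i1: "(\<lambda>s. F s * complex_of_real (P s)) integrable_on {-M1..M1}"
      by (rule integrable_continuous_real, rule continuous_on_subset[OF cFP]) auto
    have i2: "(\<lambda>s. F s * complex_of_real (K s)) integrable_on {-M1..M1}"
      by (rule integrable_continuous_real, rule continuous_on_subset[OF cFK]) auto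
    show ?thesis
      using Henstock_Kurzweil_Integration.integral_diff[OF i1 integrable_on_mult_right[OF i2, of \<i>]]
        Henstock_Kurzweil_Integration.integral_mult_right[of _ \<i> "\<lambda>s. F s * complex_of_real (K s)"]
      by simp
  qed
  finally have split: "integral UNIV (\<lambda>s. cnj (H s) * G s / (complex_of_real \<delta> + \<i> * complex_of_real s))
      = integral {-M1..M1} (\<lambda>s. F s * complex_of_real (P s)) - \<i> * integral {-M1..M1} (\<lambda>s. F s * complex_of_real (K s))" .
  have IP: "cmod (integral {-M1..M1} (\<lambda>s. F s * complex_of_real (P s))) \<le> 4 * ?SH * ?SG"
  proof -
    have hP: "(P has_integral (arctan (M1/\<delta>) - arctan (-M1/\<delta>))) {-M1..M1}"
    proof (rule fundamental_theorem_of_calculus)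
      show "-M1 \<le> M1" using R RM1 by simp
      fix x assume "x \<in> {-M1..M1}"
      have "((\<lambda>s. arctan (s/\<delta>)) has_real_derivative P x) (at x)"
        using \<delta> pos[of x]
        by (auto intro!: derivative_eq_intros simp: P_def field_simps power2_eq_square)
      thus "((\<lambda>s. arctan (s/\<delta>)) has_vector_derivative P x) (at x within {-M1..M1})"
        by (simp add: has_real_derivative_iff_has_vector_derivative has_vector_derivative_at_within)
    qed
    have "cmod (integral {-M1..M1} (\<lambda>s. F s * complex_of_real (P s))) \<le> integral {-M1..M1} (\<lambda>s. ?SH * ?SG * P s)"
    proof (rule integral_norm_bound_integral)
      show "(\<lambda>s. F s * complex_of_real (P s)) integrable_on {-M1..M1}"
        by (rule integrable_continuous_real, rule continuous_on_subset[OF cFP]) auto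
      show "(\<lambda>s. ?SH * ?SG * P s) integrable_on {-M1..M1}"
        by (rule integrable_on_mult_right, rule has_integral_integrable[OF hP])
      fix s
      have "0 \<le> P s" using \<delta> pos[of s] by (simp add: P_def)
      thus "cmod (F s * complex_of_real (P s)) \<le> ?SH * ?SG * P s"
        using Fb[of s] by (simp add: norm_mult mult_right_mono)
    qed
    also have "\<dots> = ?SH * ?SG * (arctan (M1/\<delta>) - arctan (-M1/\<delta>))"
      using integral_unique[OF hP] by simp
    also have "arctan (M1/\<delta>) - arctan (-M1/\<delta>) \<le> 4"
      using arctan_ubound[of "M1/\<delta>"] arctan_lbound[of "-M1/\<delta>"] pi_less_4 by simp
    hence "?SH * ?SG * (arctan (M1/\<delta>) - arctan (-M1/\<delta>)) \<le> ?SH * ?SG * 4"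
      using SH0 SG0 by (intro mult_left_mono) auto
    finally show ?thesis by simp
  qed
  have Kb: "\<bar>K s\<bar> \<le> 1 / \<bar>s\<bar>" for s
  proof (cases "s = 0")
    case True thus ?thesis by (simp add: K_def)
  next
    case False
    hence "\<bar>s\<bar> * \<bar>s\<bar> \<le> \<delta>^2 + s^2" by (simp add: power2_eq_square)
    thus ?thesis using pos[of s] False by (simp add: K_def abs_div field_simps)
  qed
  have K0: "0 \<le> K s" if "0 \<le> s" for s using that pos[of s] by (simp add: K_def)
  have Kodd: "K (-s) = - K s" for s by (simp add: K_def)
  have iK: "(\<lambda>s. F s * complex_of_real (K s)) integrable_on {a..b}" for a b
    by (rule integrable_continuous_real, rule continuous_on_subset[OF cFK]) auto
  have IK_split: "integral {-M1..M1} (\<lambda>s. F s * complex_of_real (K s))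
      = integral {-M1..-R} (\<lambda>s. F s * complex_of_real (K s)) + integral {-R..R} (\<lambda>s. F s * complex_of_real (K s))
        + integral {R..M1} (\<lambda>s. F s * complex_of_real (K s))"
  proof -
    have "integral {-R..R} (\<lambda>s. F s * complex_of_real (K s)) + integral {R..M1} (\<lambda>s. F s * complex_of_real (K s))
        = integral {-R..M1} (\<lambda>s. F s * complex_of_real (K s))"
      using R RM1 iK by (intro Henstock_Kurzweil_Integration.integral_combine) auto
    moreover have "integral {-M1..-R} (\<lambda>s. F s * complex_of_real (K s)) + integral {-R..M1} (\<lambda>s. F s * complex_of_real (K s))
        = integral {-M1..M1} (\<lambda>s. F s * complex_of_real (K s))"
      using R RM1 iK by (intro Henstock_Kurzweil_Integration.integral_combine) auto
    ultimately show ?thesis by (simp add: add.assoc)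
  qed
  have iGU: "integral {a..b} (\<lambda>x. (cmod (G x))^2) \<le> integral UNIV (\<lambda>x. (cmod (G x))^2)" for a b
    by (rule integral_subset_le) (auto intro!: iGG integrable_continuous_real continuous_intros continuous_on_subset[OF cG])
  have O3: "cmod (integral {R..M1} (\<lambda>s. F s * complex_of_real (K s))) \<le> ?SH * ?NG / \<rho>"
  proof -
    have "cmod (integral {R..M1} (\<lambda>s. F s * complex_of_real (K s)))
        \<le> ?SH * sqrt (integral {R..M1} (\<lambda>x. (cmod (G x))^2)) * sqrt (1/R)"
    proof (rule outer_bound)
      show "continuous_on {R..M1} (\<lambda>s. F s * complex_of_real (K s))" by (rule continuous_on_subset[OF cFK]) auto
      show "continuous_on {R..M1} (\<lambda>x. cmod (G x))" by (intro continuous_intros continuous_on_subset[OF cG]) auto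
      fix x assume x: "x \<in> {R..M1}"
      hence "0 < x" using R by auto
      hence "\<bar>K x\<bar> \<le> 1/x" using Kb[of x] by simp
      hence "cmod (H x) * (cmod (G x) * \<bar>K x\<bar>) \<le> ?SH * (cmod (G x) * (1/x))"
        by (intro mult_mono[OF supH mult_left_mono]) (use AH0 in auto)
      thus "cmod (F x * complex_of_real (K x)) \<le> ?SH * (cmod (G x) * (1/x))"
        unfolding F_def norm_mult complex_mod_cnj norm_of_real by (simp add: mult.assoc)
    qed (use R RM1 SH0 in auto)
    also have "\<dots> \<le> ?SH * ?NG * sqrt (1/R)"
      using iGU[of R M1] SH0 R by (intro mult_right_mono mult_left_mono) auto
    also have "sqrt (1/R) = 1/\<rho>" using \<rho> by (simp add: R_def real_sqrt_divide)
    finally show ?thesis by simp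
  qed
  have O1: "cmod (integral {-M1..-R} (\<lambda>s. F s * complex_of_real (K s))) \<le> ?SH * ?NG / \<rho>"
  proof -
    have e: "integral {-M1..-R} (\<lambda>s. F s * complex_of_real (K s)) = integral {R..M1} (\<lambda>s. F (-s) * complex_of_real (K (-s)))"
      using Henstock_Kurzweil_Integration.integral_reflect_real[of "M1" "R" "\<lambda>s. F (-s) * complex_of_real (K (-s))"] by simp
    have cG2: "continuous_on UNIV (\<lambda>x. G (-x))" by (rule continuous_on_compose2[OF cG]) (auto intro!: continuous_intros)
    have "cmod (integral {R..M1} (\<lambda>s. F (-s) * complex_of_real (K (-s))))
        \<le> ?SH * sqrt (integral {R..M1} (\<lambda>x. (cmod (G (-x)))^2)) * sqrt (1/R)"
    proof (rule outer_bound)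
      show "continuous_on {R..M1} (\<lambda>s. F (-s) * complex_of_real (K (-s)))"
        by (rule continuous_on_compose2[OF cFK]) (auto intro!: continuous_intros)
      show "continuous_on {R..M1} (\<lambda>x. cmod (G (-x)))" by (intro continuous_intros continuous_on_subset[OF cG2]) auto
      fix x assume x: "x \<in> {R..M1}"
      hence "0 < x" using R by auto
      hence "\<bar>K (-x)\<bar> \<le> 1/x" using Kb[of "-x"] by simp
      hence "cmod (H (-x)) * (cmod (G (-x)) * \<bar>K (-x)\<bar>) \<le> ?SH * (cmod (G (-x)) * (1/x))"
        by (intro mult_mono[OF supH mult_left_mono]) (use AH0 in auto)
      thus "cmod (F (-x) * complex_of_real (K (-x))) \<le> ?SH * (cmod (G (-x)) * (1/x))"
        unfolding F_def norm_mult complex_mod_cnj norm_of_real by (simp add: mult.assoc)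
    qed (use R RM1 SH0 in auto)
    also have "integral {R..M1} (\<lambda>x. (cmod (G (-x)))^2) = integral {-M1..-R} (\<lambda>x. (cmod (G x))^2)"
      using Henstock_Kurzweil_Integration.integral_reflect_real[of "M1" "R" "\<lambda>x. (cmod (G (-x)))^2"] by simp
    also have "?SH * sqrt (integral {-M1..-R} (\<lambda>x. (cmod (G x))^2)) * sqrt (1/R) \<le> ?SH * ?NG * sqrt (1/R)"
      using iGU[of "-M1" "-R"] SH0 R by (intro mult_right_mono mult_left_mono) auto
    also have "sqrt (1/R) = 1/\<rho>" using \<rho> by (simp add: R_def real_sqrt_divide)
    finally show ?thesis using e by simp
  qed
  have I2: "cmod (integral {-R..R} (\<lambda>s. F s * complex_of_real (K s))) \<le> (sqrt 2 * (?SH * ?NG' + ?SG * ?NH')) * 2 * sqrt R"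
  proof (rule inner_bound)
    show "continuous_on {-R..R} (\<lambda>s. F s * complex_of_real (K s))" by (rule continuous_on_subset[OF cFK]) auto
    show "0 \<le> R" using R by simp
    show "0 \<le> sqrt 2 * (?SH * ?NG' + ?SG * ?NH')" using SH0 SG0 NG'0 NH'0 by simp
    fix x assume x: "x \<in> {0..R}"
    show "cmod (F x * complex_of_real (K x) + F (-x) * complex_of_real (K (-x))) \<le> sqrt 2 * (?SH * ?NG' + ?SG * ?NH') * x powr (-1/2)"
    proof (cases "x = 0")
      case True thus ?thesis by (simp add: K_def)
    next
      case False
      hence xp: "0 < x" using x by auto
      have e1: "F x * complex_of_real (K x) + F (-x) * complex_of_real (K (-x))
          = (cnj (H x) * (G x - G (-x)) + cnj (H x - H (-x)) * G (-x)) * complex_of_real (K x)"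
        by (simp add: F_def Kodd algebra_simps)
      have dG: "cmod (G x - G (-x)) \<le> sqrt (2*x) * ?NG'"
        by (rule diff_bound[where G=G and G'=G' and M=M1 and x=x, OF dG cG' sG1']) (use xp in auto)
      have dH: "cmod (H x - H (-x)) \<le> sqrt (2*x) * ?NH'"
        by (rule diff_bound[where G=H and G'=H' and M=M1 and x=x, OF dH cH' sH1']) (use xp in auto)
      have "cmod (cnj (H x) * (G x - G (-x)) + cnj (H x - H (-x)) * G (-x))
          \<le> cmod (H x) * cmod (G x - G (-x)) + cmod (H x - H (-x)) * cmod (G (-x))"
        by (rule order_trans[OF norm_triangle_ineq]) (simp add: norm_mult del: complex_cnj_diff)
      also have "\<dots> \<le> ?SH * (sqrt (2*x) * ?NG') + (sqrt (2*x) * ?NH') * ?SG"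
        by (intro add_mono mult_mono supH supG dG dH SH0 SG0) (use xp NH'0 in auto)
      finally have b1: "cmod (cnj (H x) * (G x - G (-x)) + cnj (H x - H (-x)) * G (-x))
          \<le> sqrt (2*x) * (?SH * ?NG' + ?SG * ?NH')" by (simp add: algebra_simps)
      have b2: "\<bar>K x\<bar> \<le> 1/x" using Kb[of x] xp by simp
      have "cmod (F x * complex_of_real (K x) + F (-x) * complex_of_real (K (-x)))
          \<le> sqrt (2*x) * (?SH * ?NG' + ?SG * ?NH') * (1/x)"
        unfolding e1 norm_mult norm_of_real
        by (intro mult_mono b1 b2) (use SH0 SG0 NG'0 NH'0 xp in auto)
      also have "sqrt (2*x) * (1/x) = sqrt 2 * x powr (-1/2)"
      proof -
        have "x powr (-1/2) = 1 / sqrt x" using xp by (simp add: powr_minus_divide powr_half_sqrt[symmetric])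
        moreover have "sqrt (2*x) * (1/x) = sqrt 2 / sqrt x"
          using xp by (simp add: real_sqrt_mult field_simps)
        ultimately show ?thesis by simp
      qed
      hence "sqrt (2*x) * (?SH * ?NG' + ?SG * ?NH') * (1/x) = sqrt 2 * (?SH * ?NG' + ?SG * ?NH') * x powr (-1/2)"
      proof -
        assume a: "sqrt (2*x) * (1/x) = sqrt 2 * x powr (-1/2)"
        have "sqrt (2*x) * (?SH * ?NG' + ?SG * ?NH') * (1/x) = (sqrt (2*x) * (1/x)) * (?SH * ?NG' + ?SG * ?NH')"
          by (simp only: ac_simps)
        also have "\<dots> = (sqrt 2 * x powr (-1/2)) * (?SH * ?NG' + ?SG * ?NH')" by (simp only: a)
        also have "\<dots> = sqrt 2 * (?SH * ?NG' + ?SG * ?NH') * x powr (-1/2)" by (simp only: ac_simps)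
        finally show ?thesis .
      qed
      finally show ?thesis .
    qed
  qed
  have I2': "(sqrt 2 * (?SH * ?NG' + ?SG * ?NH')) * 2 * sqrt R \<le> 3 * \<rho> * (?SH * ?NG' + ?SG * ?NH')"
  proof -
    have "sqrt R = \<rho>" using \<rho> by (simp add: R_def)
    moreover have "sqrt 2 * 2 \<le> (3::real)"
    proof -
      have "(sqrt 2 * 2)^2 \<le> (3::real)^2" by (simp add: power_mult_distrib)
      thus ?thesis by (rule power2_le_imp_le) simp
    qed
    moreover have "0 \<le> \<rho> * (?SH * ?NG' + ?SG * ?NH')" using \<rho> SH0 SG0 NG'0 NH'0 by simp
    ultimately have "(sqrt 2 * 2) * (\<rho> * (?SH * ?NG' + ?SG * ?NH')) \<le> 3 * (\<rho> * (?SH * ?NG' + ?SG * ?NH'))"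
      by (intro mult_right_mono) auto
    moreover have "(sqrt 2 * (?SH * ?NG' + ?SG * ?NH')) * 2 * sqrt R = (sqrt 2 * 2) * (\<rho> * (?SH * ?NG' + ?SG * ?NH'))"
      using \<open>sqrt R = \<rho>\<close> by (simp only: ac_simps)
    ultimately show ?thesis by (simp only: ac_simps)
  qed
  have "cmod (integral UNIV (\<lambda>s. cnj (H s) * G s / (complex_of_real \<delta> + \<i> * complex_of_real s)))
      \<le> cmod (integral {-M1..M1} (\<lambda>s. F s * complex_of_real (P s))) + cmod (integral {-M1..M1} (\<lambda>s. F s * complex_of_real (K s)))"
    unfolding split by (rule order_trans[OF norm_triangle_ineq4]) (simp add: norm_mult)
  also have "cmod (integral {-M1..M1} (\<lambda>s. F s * complex_of_real (K s)))
      \<le> cmod (integral {-M1..-R} (\<lambda>s. F s * complex_of_real (K s))) + cmod (integral {-R..R} (\<lambda>s. F s * complex_of_real (K s)))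
        + cmod (integral {R..M1} (\<lambda>s. F s * complex_of_real (K s)))"
    unfolding IK_split by (intro order_trans[OF norm_triangle_ineq] add_mono norm_triangle_ineq) auto
  finally show ?thesis using IP O1 O3 I2 I2' by simp
qed

definition Dd :: "('a::euclidean_space \<Rightarrow> complex) \<Rightarrow> 'a \<Rightarrow> 'a \<Rightarrow> complex" where
  "Dd f u v = frechet_derivative f (at v) u"

lemma Cc_basic:
  fixes f :: "'a::euclidean_space \<Rightarrow> complex"
  assumes "Cc_inf f"
  shows "continuous_on UNIV f" "\<And>v. f differentiable (at v)"
    "\<And>b. b \<in> Basis \<Longrightarrow> continuous_on UNIV (partial_deriv f b)"
proof -
  have s: "smooth f" using assms by (simp add: Cc_inf_def)
  have "Ck 0 f" using s by (simp add: smooth_def)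
  thus "continuous_on UNIV f" by simp
  have "Ck (Suc 0) f" using s unfolding smooth_def by blast
  thus "\<And>v. f differentiable (at v)" "\<And>b. b \<in> Basis \<Longrightarrow> continuous_on UNIV (partial_deriv f b)" by auto
qed

lemma Cc_supp:
  fixes f :: "'a::euclidean_space \<Rightarrow> complex"
  assumes "Cc_inf f"
  obtains B where "0 < B" "\<And>v. B \<le> norm v \<Longrightarrow> f v = 0"
    "\<And>v w. B \<le> norm v \<Longrightarrow> frechet_derivative f (at v) w = 0"
proof -
  let ?S = "closure {v. f v \<noteq> 0}"
  have "compact ?S" using assms by (simp add: Cc_inf_def)
  hence "bounded ?S" by (rule compact_imp_bounded)
  then obtain B0 where B0: "\<And>x. x \<in> ?S \<Longrightarrow> norm x \<le> B0" by (auto simp: bounded_iff)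
  define B where "B = max B0 0 + 1"
  have Bpos: "0 < B" by (simp add: B_def)
  have out: "v \<notin> ?S" if "B \<le> norm v" for v
    using B0[of v] that by (auto simp: B_def)
  have z: "f v = 0" if "B \<le> norm v" for v
    using out[OF that] closure_subset[of "{v. f v \<noteq> 0}"] by auto
  have d: "frechet_derivative f (at v) w = 0" if "B \<le> norm v" for v w
  proof -
    have "((\<lambda>_. 0) has_derivative (\<lambda>_. 0)) (at v)" by (rule has_derivative_const)
    hence "(f has_derivative (\<lambda>_. 0)) (at v)"
    proof (rule has_derivative_transform_within_open)
      show "open (- ?S)" by (intro open_Compl closed_closure)
      show "v \<in> - ?S" using out[OF that] by simp
      fix x assume "x \<in> - ?S"
      thus "0 = f x" using closure_subset[of "{v. f v \<noteq> 0}"] by auto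
    qed
    hence "(\<lambda>_. 0) = frechet_derivative f (at v)" by (rule frechet_derivative_at)
    thus ?thesis by (simp add: fun_eq_iff)
  qed
  show ?thesis by (rule that[OF Bpos z d])
qed

lemma Dd_sum:
  fixes f :: "'a::euclidean_space \<Rightarrow> complex"
  assumes "f differentiable (at v)"
  shows "Dd f u v = (\<Sum>b\<in>Basis. (u \<bullet> b) *\<^sub>R partial_deriv f b v)"
proof -
  have "(f has_derivative frechet_derivative f (at v)) (at v)"
    using assms by (simp add: frechet_derivative_works)
  hence lin: "linear (frechet_derivative f (at v))"
    by (rule has_derivative_linear)
  have "Dd f u v = frechet_derivative f (at v) (\<Sum>b\<in>Basis. (u \<bullet> b) *\<^sub>R b)"
    by (simp add: Dd_def euclidean_representation)
  also have "\<dots> = (\<Sum>b\<in>Basis. (u \<bullet> b) *\<^sub>R frechet_derivative f (at v) b)"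
    by (simp add: linear_sum[OF lin] linear_scale[OF lin])
  finally show ?thesis by (simp add: partial_deriv_def)
qed

lemma Dd_cont:
  fixes f :: "'a::euclidean_space \<Rightarrow> complex"
  assumes "Cc_inf f"
  shows "continuous_on UNIV (Dd f u)"
proof -
  have "Dd f u = (\<lambda>v. \<Sum>b\<in>Basis. (u \<bullet> b) *\<^sub>R partial_deriv f b v)"
    by (rule ext) (simp add: Dd_sum Cc_basic(2)[OF assms])
  moreover have "continuous_on UNIV (\<lambda>v. \<Sum>b\<in>Basis. (u \<bullet> b) *\<^sub>R partial_deriv f b v)"
    by (intro continuous_on_sum continuous_on_scaleR continuous_on_const Cc_basic(3)[OF assms])
  ultimately show ?thesis by simp
qed

lemma Dd_bound:
  fixes f :: "'a::euclidean_space \<Rightarrow> complex"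
  assumes "f differentiable (at v)" and u: "norm u = 1"
  shows "(cmod (Dd f u v))^2 \<le> (\<Sum>b\<in>Basis. (cmod (partial_deriv f b v))^2)"
proof -
  have "cmod (Dd f u v) \<le> (\<Sum>b\<in>Basis. \<bar>u \<bullet> b\<bar> * cmod (partial_deriv f b v))"
    unfolding Dd_sum[OF assms(1)] by (rule order_trans[OF norm_sum]) simp
  hence "(cmod (Dd f u v))^2 \<le> (\<Sum>b\<in>Basis. \<bar>u \<bullet> b\<bar> * cmod (partial_deriv f b v))^2"
    by (intro power_mono) auto
  also have "\<dots> \<le> (\<Sum>b\<in>Basis. (\<bar>u \<bullet> b\<bar>)^2) * (\<Sum>b\<in>Basis. (cmod (partial_deriv f b v))^2)"
    by (rule Cauchy_Schwarz_ineq_sum)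
  also have "(\<Sum>b\<in>Basis. (\<bar>u \<bullet> b\<bar>)^2) = (norm u)^2"
  proof -
    have "(\<Sum>b\<in>Basis. (\<bar>u \<bullet> b\<bar>)^2) = (\<Sum>b\<in>Basis. (u \<bullet> b) * (u \<bullet> b))"
      by (simp add: power2_eq_square)
    also have "\<dots> = u \<bullet> u" by (simp add: euclidean_inner[of u u])
    also have "\<dots> = (norm u)^2" by (simp add: power2_norm_eq_inner)
    finally show ?thesis .
  qed
  finally show ?thesis using u by simp
qed

lemma line_deriv:
  fixes f :: "'a::euclidean_space \<Rightarrow> complex"
  assumes "\<And>v. f differentiable (at v)"
  shows "((\<lambda>s. f (p + s *\<^sub>R u)) has_vector_derivative Dd f u (p + s *\<^sub>R u)) (at s)"
proof -
  have d1: "((\<lambda>s. p + s *\<^sub>R u) has_derivative (\<lambda>s. s *\<^sub>R u)) (at s)"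
    by (auto intro!: derivative_eq_intros)
  have d2: "(f has_derivative frechet_derivative f (at (p + s *\<^sub>R u))) (at (p + s *\<^sub>R u))"
    using assms by (simp add: frechet_derivative_works)
  have lin: "linear (frechet_derivative f (at (p + s *\<^sub>R u)))" by (rule has_derivative_linear[OF d2])
  have "((\<lambda>s. f (p + s *\<^sub>R u)) has_derivative (\<lambda>x. frechet_derivative f (at (p + s *\<^sub>R u)) (x *\<^sub>R u))) (at s)"
    using has_derivative_compose[OF d1 d2] by simp
  moreover have "(\<lambda>x. frechet_derivative f (at (p + s *\<^sub>R u)) (x *\<^sub>R u)) = (\<lambda>x. x *\<^sub>R Dd f u (p + s *\<^sub>R u))"
    by (rule ext) (simp add: Dd_def linear_scale[OF lin])
  ultimately show ?thesis by (simp add: has_vector_derivative_def)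
qed

lemma transl_nn:
  fixes G :: "'a::euclidean_space \<Rightarrow> ennreal"
  assumes [measurable]: "G \<in> borel_measurable borel"
  shows "(\<integral>\<^sup>+w. G w \<partial>lborel) = (\<integral>\<^sup>+v. G (c + v) \<partial>lborel)"
proof -
  have "(\<integral>\<^sup>+w. G w \<partial>lborel) = (\<integral>\<^sup>+w. G w \<partial>(distr lborel borel ((+) c)))"
    by (simp add: lborel_distr_plus)
  also have "\<dots> = (\<integral>\<^sup>+v. G (c + v) \<partial>lborel)"
    by (rule nn_integral_distr) auto
  finally show ?thesis .
qed

lemma transl_int:
  fixes G :: "'a::euclidean_space \<Rightarrow> 'b::{banach, second_countable_topology}"
  assumes [measurable]: "G \<in> borel_measurable borel"
  shows "(\<integral>w. G w \<partial>lborel) = (\<integral>v. G (c + v) \<partial>lborel)"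
proof -
  have "(\<integral>w. G w \<partial>lborel) = (\<integral>w. G w \<partial>(distr lborel borel ((+) c)))"
    by (simp add: lborel_distr_plus)
  also have "\<dots> = (\<integral>v. G (c + v) \<partial>lborel)"
    by (rule integral_distr) auto
  finally show ?thesis .
qed

lemma ind_shift: "indicator {0..1::real} (c - s) = indicator {c-1..c} s"
  by (auto simp: indicator_def)

lemma slab:
  fixes f :: "'a::euclidean_space \<Rightarrow> 'b::{banach, second_countable_topology}" and u :: 'a
  assumes u: "norm u = 1" and f: "integrable lborel f"
  shows "integrable lborel (\<lambda>v. indicator {0..1} (u \<bullet> v) *\<^sub>R (\<integral>s. f (v + (s - u \<bullet> v) *\<^sub>R u) \<partial>lborel))"
    and "(\<integral>v. f v \<partial>lborel) = (\<integral>v. indicator {0..1} (u \<bullet> v) *\<^sub>R (\<integral>s. f (v + (s - u \<bullet> v) *\<^sub>R u) \<partial>lborel) \<partial>lborel)"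
proof -
  have fm[measurable]: "f \<in> borel_measurable borel"
    using borel_measurable_integrable[OF f] by simp
  have uu: "u \<bullet> u = 1" using u by (simp add: norm_eq_1)
  define \<Phi>1 where "\<Phi>1 = (\<lambda>(w::'a, s::real). indicator {0..1::real} (u \<bullet> w - s) *\<^sub>R f w)"
  define \<Phi>2 where "\<Phi>2 = (\<lambda>(v::'a, s::real). indicator {0..1::real} (u \<bullet> v) *\<^sub>R f (v + s *\<^sub>R u))"
  have m1[measurable]: "\<Phi>1 \<in> borel_measurable (lborel \<Otimes>\<^sub>M lborel)" unfolding \<Phi>1_def by measurable
  have m2[measurable]: "\<Phi>2 \<in> borel_measurable (lborel \<Otimes>\<^sub>M lborel)" unfolding \<Phi>2_def by measurable
  have one: "(\<integral>\<^sup>+s. indicator {0..1::real} (c - s) \<partial>lborel) = 1" for c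
    by (simp add: ind_shift)
  have n1: "(\<integral>\<^sup>+z. ennreal (norm (\<Phi>1 z)) \<partial>(lborel \<Otimes>\<^sub>M lborel)) = (\<integral>\<^sup>+w. ennreal (norm (f w)) \<partial>lborel)"
  proof -
    have "(\<integral>\<^sup>+z. ennreal (norm (\<Phi>1 z)) \<partial>(lborel \<Otimes>\<^sub>M lborel))
        = (\<integral>\<^sup>+w. (\<integral>\<^sup>+s. ennreal (norm (\<Phi>1 (w, s))) \<partial>lborel) \<partial>lborel)"
      using lborel.nn_integral_fst[of "\<lambda>z. ennreal (norm (\<Phi>1 z))" lborel] by simp
    also have "\<dots> = (\<integral>\<^sup>+w. (\<integral>\<^sup>+s. ennreal (norm (f w)) * indicator {0..1::real} (u \<bullet> w - s) \<partial>lborel) \<partial>lborel)"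
      by (intro nn_integral_cong) (auto simp: \<Phi>1_def indicator_def)
    also have "\<dots> = (\<integral>\<^sup>+w. ennreal (norm (f w)) \<partial>lborel)"
      by (intro nn_integral_cong) (simp add: nn_integral_cmult one)
    finally show ?thesis .
  qed
  have i1: "integrable (lborel \<Otimes>\<^sub>M lborel) \<Phi>1"
    using f n1 by (simp add: integrable_iff_bounded)
  have n2: "(\<integral>\<^sup>+z. ennreal (norm (\<Phi>2 z)) \<partial>(lborel \<Otimes>\<^sub>M lborel)) = (\<integral>\<^sup>+z. ennreal (norm (\<Phi>1 z)) \<partial>(lborel \<Otimes>\<^sub>M lborel))"
  proof -
    have "(\<integral>\<^sup>+z. ennreal (norm (\<Phi>2 z)) \<partial>(lborel \<Otimes>\<^sub>M lborel))
        = (\<integral>\<^sup>+s. (\<integral>\<^sup>+v. ennreal (norm (\<Phi>2 (v, s))) \<partial>lborel) \<partial>lborel)"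
      using lborel_pair.nn_integral_snd[of "\<lambda>z. ennreal (norm (\<Phi>2 z))"] by simp
    also have "\<dots> = (\<integral>\<^sup>+s. (\<integral>\<^sup>+w. ennreal (norm (\<Phi>1 (w, s))) \<partial>lborel) \<partial>lborel)"
    proof -
      have "(\<integral>\<^sup>+v. ennreal (norm (\<Phi>2 (v, s))) \<partial>lborel) = (\<integral>\<^sup>+w. ennreal (norm (\<Phi>1 (w, s))) \<partial>lborel)" for s
      proof -
        have "(\<integral>\<^sup>+w. ennreal (norm (\<Phi>1 (w, s))) \<partial>lborel) = (\<integral>\<^sup>+v. ennreal (norm (\<Phi>1 (s *\<^sub>R u + v, s))) \<partial>lborel)"
          by (rule transl_nn) (simp add: \<Phi>1_def)
        also have "\<dots> = (\<integral>\<^sup>+v. ennreal (norm (\<Phi>2 (v, s))) \<partial>lborel)"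
          by (intro nn_integral_cong) (simp add: \<Phi>1_def \<Phi>2_def inner_add_right uu add.commute)
        finally show ?thesis by simp
      qed
      thus ?thesis by simp
    qed
    also have "\<dots> = (\<integral>\<^sup>+z. ennreal (norm (\<Phi>1 z)) \<partial>(lborel \<Otimes>\<^sub>M lborel))"
      using lborel_pair.nn_integral_snd[of "\<lambda>z. ennreal (norm (\<Phi>1 z))"] by simp
    finally show ?thesis .
  qed
  have i2: "integrable (lborel \<Otimes>\<^sub>M lborel) \<Phi>2"
    using i1 n2 by (simp add: integrable_iff_bounded)
  have e1: "(\<integral>v. f v \<partial>lborel) = (\<integral>w. (\<integral>s. \<Phi>1 (w, s) \<partial>lborel) \<partial>lborel)"
  proof -
    have "f w = (\<integral>s. \<Phi>1 (w, s) \<partial>lborel)" for w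
    proof -
      have "(\<integral>s. \<Phi>1 (w, s) \<partial>lborel) = (\<integral>s. indicator {u \<bullet> w - 1..u \<bullet> w} s *\<^sub>R f w \<partial>lborel)"
        by (intro Bochner_Integration.integral_cong refl) (auto simp: \<Phi>1_def ind_shift)
      also have "\<dots> = f w" by simp
      finally show ?thesis by simp
    qed
    thus ?thesis by simp
  qed
  also have "\<dots> = (\<integral>s. (\<integral>w. \<Phi>1 (w, s) \<partial>lborel) \<partial>lborel)"
    using lborel_pair.Fubini_integral[of "\<lambda>w s. \<Phi>1 (w, s)"] i1 by simp
  also have "\<dots> = (\<integral>s. (\<integral>v. \<Phi>2 (v, s) \<partial>lborel) \<partial>lborel)"
  proof -
    have "(\<integral>w. \<Phi>1 (w, s) \<partial>lborel) = (\<integral>v. \<Phi>2 (v, s) \<partial>lborel)" for s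
    proof -
      have "(\<integral>w. \<Phi>1 (w, s) \<partial>lborel) = (\<integral>v. \<Phi>1 (s *\<^sub>R u + v, s) \<partial>lborel)"
        by (rule transl_int) (simp add: \<Phi>1_def)
      also have "\<dots> = (\<integral>v. \<Phi>2 (v, s) \<partial>lborel)"
        by (intro Bochner_Integration.integral_cong refl) (simp_all add: \<Phi>1_def \<Phi>2_def inner_add_right uu add.commute)
      finally show ?thesis .
    qed
    thus ?thesis by simp
  qed
  also have "\<dots> = (\<integral>v. (\<integral>s. \<Phi>2 (v, s) \<partial>lborel) \<partial>lborel)"
    using lborel_pair.Fubini_integral[of "\<lambda>v s. \<Phi>2 (v, s)"] i2 by simp
  finally have e2: "(\<integral>v. f v \<partial>lborel) = (\<integral>v. (\<integral>s. \<Phi>2 (v, s) \<partial>lborel) \<partial>lborel)" .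
  have i3: "integrable lborel (\<lambda>v. \<integral>s. \<Phi>2 (v, s) \<partial>lborel)"
    by (rule lborel_pair.integrable_fst'[OF i2])
  have e3: "(\<integral>s. \<Phi>2 (v, s) \<partial>lborel) = indicator {0..1} (u \<bullet> v) *\<^sub>R (\<integral>s. f (v + (s - u \<bullet> v) *\<^sub>R u) \<partial>lborel)" for v
  proof -
    have "(\<integral>s. \<Phi>2 (v, s) \<partial>lborel) = indicator {0..1} (u \<bullet> v) *\<^sub>R (\<integral>s. f (v + s *\<^sub>R u) \<partial>lborel)"
      by (simp add: \<Phi>2_def)
    also have "(\<integral>s. f (v + s *\<^sub>R u) \<partial>lborel) = \<bar>1\<bar> *\<^sub>R (\<integral>s. f (v + (- (u \<bullet> v) + 1 * s) *\<^sub>R u) \<partial>lborel)"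
      by (rule lborel_integral_real_affine) simp
    finally show ?thesis by simp
  qed
  show "integrable lborel (\<lambda>v. indicator {0..1} (u \<bullet> v) *\<^sub>R (\<integral>s. f (v + (s - u \<bullet> v) *\<^sub>R u) \<partial>lborel))"
    using i3 e3 by simp
  show "(\<integral>v. f v \<partial>lborel) = (\<integral>v. indicator {0..1} (u \<bullet> v) *\<^sub>R (\<integral>s. f (v + (s - u \<bullet> v) *\<^sub>R u) \<partial>lborel) \<partial>lborel)"
    using e2 e3 by simp
qed

lemma opt:
  fixes X c \<alpha> \<beta> :: real
  assumes h: "\<And>\<rho>. 0 < \<rho> \<Longrightarrow> X \<le> c + \<alpha>/\<rho> + \<beta>*\<rho>" and a: "0 \<le> \<alpha>" and b: "0 \<le> \<beta>"
  shows "X \<le> c + 2 * sqrt (\<alpha> * \<beta>)"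
proof (cases "0 < \<alpha> \<and> 0 < \<beta>")
  case True
  define \<rho> where "\<rho> = sqrt (\<alpha>/\<beta>)"
  have \<rho>: "0 < \<rho>" using True by (simp add: \<rho>_def)
  have e1: "\<alpha>/\<rho> = sqrt (\<alpha>*\<beta>)"
    using True by (simp add: \<rho>_def real_sqrt_divide real_sqrt_mult field_simps)
  have e2: "\<beta>*\<rho> = sqrt (\<alpha>*\<beta>)"
    using True by (simp add: \<rho>_def real_sqrt_divide real_sqrt_mult field_simps)
  show ?thesis using h[OF \<rho>] e1 e2 by simp
next
  case False
  hence z: "\<alpha> * \<beta> = 0" using a b by auto
  show ?thesis
  proof (rule ccontr)
    assume "\<not> ?thesis"
    hence d: "c < X" using z by simp
    show False
    proof (cases "\<alpha> = 0")
      case True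
      define \<rho> where "\<rho> = (X - c) / (2 * (\<beta> + 1))"
      have \<rho>: "0 < \<rho>" using d b by (simp add: \<rho>_def)
      have "\<beta> * \<rho> \<le> (\<beta>+1) * \<rho>" using \<rho> by simp
      also have "\<dots> = (X - c)/2"
      proof -
        have ne: "\<beta> + 1 \<noteq> 0" "2*\<beta> + 2 \<noteq> 0" using b by auto
        thus ?thesis by (simp add: \<rho>_def field_simps)
      qed
      finally show False using h[OF \<rho>] True d by simp
    next
      case False
      hence \<beta>0: "\<beta> = 0" using z by simp
      have a0: "0 < \<alpha>" using False a by simp
      define \<rho> where "\<rho> = 2 * \<alpha> / (X - c)"
      have \<rho>: "0 < \<rho>" using d a0 by (simp add: \<rho>_def)
      have "\<alpha> / \<rho> = (X - c)/2" using a0 d by (simp add: \<rho>_def)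
      thus False using h[OF \<rho>] \<beta>0 d by simp
    qed
  qed
qed

lemma int_cs:
  fixes F G :: "'x \<Rightarrow> real"
  assumes [measurable]: "F \<in> borel_measurable M" "G \<in> borel_measurable M"
    and F0: "\<And>x. 0 \<le> F x" and G0: "\<And>x. 0 \<le> G x"
    and iF: "integrable M (\<lambda>x. (F x)^2)" and iG: "integrable M (\<lambda>x. (G x)^2)"
  shows "integrable M (\<lambda>x. F x * G x)"
    "(\<integral>x. F x * G x \<partial>M) \<le> sqrt (\<integral>x. (F x)^2 \<partial>M) * sqrt (\<integral>x. (G x)^2 \<partial>M)"
proof -
  have amgm: "F x * G x \<le> (\<theta> * (F x)^2 + (G x)^2 / \<theta>) / 2" if "0 < \<theta>" for x \<theta>
  proof -
    have "0 \<le> (\<theta> * F x - G x)^2 / \<theta>" using that by simp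
    also have "(\<theta> * F x - G x)^2 / \<theta> = \<theta> * (F x)^2 + (G x)^2 / \<theta> - 2 * (F x * G x)"
      using that by (simp add: power2_eq_square field_simps)
    finally show ?thesis by simp
  qed
  have iFG: "integrable M (\<lambda>x. ((F x)^2 + (G x)^2) / 2)" using iF iG by simp
  show iP: "integrable M (\<lambda>x. F x * G x)"
  proof (rule Bochner_Integration.integrable_bound[OF iFG])
    show "(\<lambda>x. F x * G x) \<in> borel_measurable M" by measurable
    show "AE x in M. norm (F x * G x) \<le> norm (((F x)^2 + (G x)^2) / 2)"
      using amgm[of 1] F0 G0 by (auto simp: abs_mult)
  qed
  have "(\<integral>x. F x * G x \<partial>M) \<le> 0 + ((\<integral>x. (G x)^2 \<partial>M)/2)/\<theta> + ((\<integral>x. (F x)^2 \<partial>M)/2) * \<theta>" if "0 < \<theta>" for \<theta>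
  proof -
    have "(\<integral>x. F x * G x \<partial>M) \<le> (\<integral>x. (\<theta> * (F x)^2 + (G x)^2 / \<theta>) / 2 \<partial>M)"
      using iP iF iG amgm[OF that] by (intro integral_mono) auto
    also have "\<dots> = ((\<integral>x. (G x)^2 \<partial>M)/2)/\<theta> + ((\<integral>x. (F x)^2 \<partial>M)/2) * \<theta>"
      using iF iG by (simp add: field_simps)
    finally show ?thesis by simp
  qed
  hence "(\<integral>x. F x * G x \<partial>M) \<le> 0 + 2 * sqrt (((\<integral>x. (G x)^2 \<partial>M)/2) * ((\<integral>x. (F x)^2 \<partial>M)/2))"
    by (rule opt) auto
  also have "\<dots> = sqrt (\<integral>x. (F x)^2 \<partial>M) * sqrt (\<integral>x. (G x)^2 \<partial>M)"
    by (simp add: real_sqrt_mult real_sqrt_divide)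
  finally show "(\<integral>x. F x * G x \<partial>M) \<le> sqrt (\<integral>x. (F x)^2 \<partial>M) * sqrt (\<integral>x. (G x)^2 \<partial>M)" .
qed

lemma cs_int_a:
  fixes q :: "'a::euclidean_space \<Rightarrow> 'b::{banach,second_countable_topology}"
  assumes c: "continuous_on UNIV q" and s: "\<And>v. B \<le> norm v \<Longrightarrow> q v = 0"
  shows "integrable lborel q"
proof -
  have e: "q = (\<lambda>x. indicator (cball 0 B) x *\<^sub>R q x)"
  proof (rule ext)
    fix x show "q x = indicator (cball 0 B) x *\<^sub>R q x"
      using s[of x] by (cases "x \<in> cball 0 B") (auto simp: indicator_def)
  qed
  have "integrable lborel (\<lambda>x. indicator (cball 0 B) x *\<^sub>R q x)"
    by (rule borel_integrable_compact) (auto intro: continuous_on_subset[OF c])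
  thus ?thesis using e by simp
qed


lemma final_alg:
  fixes X a a' b b' JA JG :: real
  assumes nn: "0 \<le> a" "0 \<le> a'" "0 \<le> b" "0 \<le> b'"
    and JA: "0 \<le> JA" "JA \<le> a * a'" and JG: "0 \<le> JG" "JG \<le> b * b'"
    and h: "\<And>\<rho>. 0 < \<rho> \<Longrightarrow> X \<le> 8 * sqrt JA * sqrt JG + (2 * sqrt 2 / \<rho>) * sqrt JA * b
                 + 3 * sqrt 2 * \<rho> * (sqrt JA * b' + sqrt JG * a')"
  shows "X \<le> 10 * (a' * b + a * b')"
proof -
  define s1 where "s1 = sqrt (a * a')"
  define s2 where "s2 = sqrt (b * b')"
  have s10: "0 \<le> s1" and s20: "0 \<le> s2" using nn by (auto simp: s1_def s2_def)
  have q1: "sqrt JA \<le> s1" using JA by (simp add: s1_def)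
  have q2: "sqrt JG \<le> s2" using JG by (simp add: s2_def)
  have qa: "0 \<le> sqrt JA" and qg: "0 \<le> sqrt JG" using JA JG by auto
  have h2: "X \<le> 8 * (s1 * s2) + (2 * sqrt 2 * s1 * b) / \<rho> + (3 * sqrt 2 * (s1 * b' + s2 * a')) * \<rho>"
    if \<rho>: "0 < \<rho>" for \<rho>
  proof -
    have "8 * sqrt JA * sqrt JG \<le> 8 * (s1 * s2)"
      using mult_mono[OF q1 q2 s10 qg] by simp
    moreover have "(2 * sqrt 2 / \<rho>) * sqrt JA * b \<le> (2 * sqrt 2 * s1 * b) / \<rho>"
    proof -
      have "(2 * sqrt 2 / \<rho>) * sqrt JA * b = (2 * sqrt 2 * b / \<rho>) * sqrt JA" by (simp add: field_simps)
      also have "\<dots> \<le> (2 * sqrt 2 * b / \<rho>) * s1" using q1 \<rho> nn by (intro mult_left_mono) auto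
      also have "\<dots> = (2 * sqrt 2 * s1 * b) / \<rho>" by (simp add: field_simps)
      finally show ?thesis .
    qed
    moreover have "3 * sqrt 2 * \<rho> * (sqrt JA * b' + sqrt JG * a') \<le> (3 * sqrt 2 * (s1 * b' + s2 * a')) * \<rho>"
    proof -
      have "sqrt JA * b' + sqrt JG * a' \<le> s1 * b' + s2 * a'"
        using q1 q2 nn by (intro add_mono mult_right_mono) auto
      hence "(3 * sqrt 2 * \<rho>) * (sqrt JA * b' + sqrt JG * a') \<le> (3 * sqrt 2 * \<rho>) * (s1 * b' + s2 * a')"
        using \<rho> by (intro mult_left_mono) auto
      thus ?thesis by (simp add: field_simps)
    qed
    ultimately show ?thesis using h[OF \<rho>] by linarith
  qed
  have "X \<le> 8 * (s1 * s2) + 2 * sqrt ((2 * sqrt 2 * s1 * b) * (3 * sqrt 2 * (s1 * b' + s2 * a')))"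
    by (rule opt[OF h2]) (use s10 s20 nn in auto)
  also have "(2 * sqrt 2 * s1 * b) * (3 * sqrt 2 * (s1 * b' + s2 * a')) = 12 * ((s1 * s2)^2 + (s1 * s2) * (a' * b))"
  proof -
    have "s1^2 = a * a'" using nn by (simp add: s1_def)
    moreover have "s2^2 = b * b'" using nn by (simp add: s2_def)
    moreover have "(sqrt 2)^2 = 2" by simp
    ultimately show ?thesis by (simp add: power2_eq_square algebra_simps)
  qed
  finally have X1: "X \<le> 8 * (s1 * s2) + 2 * sqrt (12 * ((s1 * s2)^2 + (s1 * s2) * (a' * b)))" .
  define Xv where "Xv = a' * b"
  define Yv where "Yv = a * b'"
  have X0: "0 \<le> Xv" and Y0: "0 \<le> Yv" using nn by (auto simp: Xv_def Yv_def)
  have r: "s1 * s2 = sqrt (Xv * Yv)"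
    by (simp add: s1_def s2_def Xv_def Yv_def real_sqrt_mult[symmetric] algebra_simps)
  have rm: "s1 * s2 \<le> (Xv + Yv)/2" unfolding r by (rule arith_geo_mean_sqrt[OF X0 Y0])
  have r0: "0 \<le> s1 * s2" using s10 s20 by simp
  have "(s1 * s2)^2 + (s1 * s2) * Xv \<le> ((Xv + Yv)/2)^2 + ((Xv+Yv)/2) * (Xv + Yv)"
    using rm r0 X0 Y0 by (intro add_mono power_mono mult_mono) auto
  hence "12 * ((s1 * s2)^2 + (s1 * s2) * Xv) \<le> (3 * (Xv + Yv))^2"
    by (simp add: power2_eq_square algebra_simps)
  hence "sqrt (12 * ((s1 * s2)^2 + (s1 * s2) * Xv)) \<le> 3 * (Xv + Yv)"
    using X0 Y0 by (intro real_le_lsqrt) auto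
  thus ?thesis using X1 rm by (simp add: Xv_def Yv_def)
qed

definition pt :: "'a::euclidean_space \<Rightarrow> 'a \<Rightarrow> 'a" where
  "pt u v = v - (u \<bullet> v) *\<^sub>R u"

lemma lp_pt: "v + (s - u \<bullet> v) *\<^sub>R u = pt u v + s *\<^sub>R u"
  by (simp add: pt_def algebra_simps)

lemma inner_pt:
  assumes "norm u = 1" shows "u \<bullet> (pt u v + s *\<^sub>R u) = s"
proof -
  have "u \<bullet> u = 1" using assms by (simp add: norm_eq_1)
  thus ?thesis by (simp add: pt_def inner_diff_right inner_add_right)
qed

lemma line_supp:
  fixes p u :: "'a::euclidean_space"
  assumes "norm u = 1" "B + norm p \<le> \<bar>s\<bar>"
  shows "B \<le> norm (p + s *\<^sub>R u)"
proof -
  have "\<bar>s\<bar> = norm ((p + s *\<^sub>R u) - p)" using assms(1) by simp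
  also have "\<dots> \<le> norm (p + s *\<^sub>R u) + norm p" by (rule norm_triangle_ineq4)
  finally show ?thesis using assms(2) by simp
qed

lemma line_HK:
  fixes x :: "'a::euclidean_space \<Rightarrow> 'b::euclidean_space"
  assumes c: "continuous_on UNIV x" and s: "\<And>w. B \<le> norm w \<Longrightarrow> x w = 0" and u: "norm u = 1"
  shows "integrable lborel (\<lambda>s. x (p + s *\<^sub>R u))"
    "integral UNIV (\<lambda>s. x (p + s *\<^sub>R u)) = (\<integral>s. x (p + s *\<^sub>R u) \<partial>lborel)"
proof -
  have cq: "continuous_on UNIV (\<lambda>s. x (p + s *\<^sub>R u))"
    by (rule continuous_on_compose2[OF c]) (auto intro!: continuous_intros)
  have sq: "\<And>s. B + norm p \<le> \<bar>s\<bar> \<Longrightarrow> x (p + s *\<^sub>R u) = 0"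
    using s line_supp[OF u] by blast
  show i: "integrable lborel (\<lambda>s. x (p + s *\<^sub>R u))" by (rule csupp_int(1)[OF cq sq])
  show "integral UNIV (\<lambda>s. x (p + s *\<^sub>R u)) = (\<integral>s. x (p + s *\<^sub>R u) \<partial>lborel)"
    by (rule integral_lborel[OF i])
qed

lemma slab_line:
  fixes x :: "'a::euclidean_space \<Rightarrow> real"
  assumes c: "continuous_on UNIV x" and s: "\<And>w. B \<le> norm w \<Longrightarrow> x w = 0" and u: "norm u = 1"
    and x0: "\<And>w. 0 \<le> x w"
  defines "F \<equiv> (\<lambda>v. indicator {0..1} (u \<bullet> v) * sqrt (\<integral>s. x (pt u v + s *\<^sub>R u) \<partial>lborel))"
  shows "F \<in> borel_measurable lborel" "\<And>v. 0 \<le> F v" "integrable lborel (\<lambda>v. (F v)^2)"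
    "(\<integral>v. (F v)^2 \<partial>lborel) = (\<integral>w. x w \<partial>lborel)"
proof -
  have xm[measurable]: "x \<in> borel_measurable borel" by (rule borel_measurable_continuous_onI[OF c])
  show "F \<in> borel_measurable lborel" unfolding F_def pt_def by measurable
  have L0: "0 \<le> (\<integral>s. x (pt u v + s *\<^sub>R u) \<partial>lborel)" for v
    by (rule Bochner_Integration.integral_nonneg) (simp add: x0)
  show "\<And>v. 0 \<le> F v" unfolding F_def using L0 by simp
  have sq: "(F v)^2 = indicator {0..1} (u \<bullet> v) *\<^sub>R (\<integral>s. x (v + (s - u \<bullet> v) *\<^sub>R u) \<partial>lborel)" for v
    unfolding F_def lp_pt using L0[of v] by (simp add: power_mult_distrib indicator_def)
  have ix: "integrable lborel x" by (rule cs_int_a[OF c s])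
  show "integrable lborel (\<lambda>v. (F v)^2)" unfolding sq by (rule slab(1)[OF u ix])
  show "(\<integral>v. (F v)^2 \<partial>lborel) = (\<integral>w. x w \<partial>lborel)" unfolding sq by (rule slab(2)[OF u ix, symmetric])
qed

lemma main_bound:
  fixes h g :: "'a::euclidean_space \<Rightarrow> complex" and u :: 'a and \<delta> :: real
  assumes Ch: "Cc_inf h" and Cg: "Cc_inf g" and u: "norm u = 1" and \<delta>: "0 < \<delta>"
  shows "cmod (\<integral>w. cnj (h w) * g w / (complex_of_real \<delta> + \<i> * complex_of_real (u \<bullet> w)) \<partial>lborel)
    \<le> 10 * (sqrt (\<integral>w. (cmod (Dd h u w))^2 \<partial>lborel) * sqrt (\<integral>w. (cmod (g w))^2 \<partial>lborel)
           + sqrt (\<integral>w. (cmod (h w))^2 \<partial>lborel) * sqrt (\<integral>w. (cmod (Dd g u w))^2 \<partial>lborel))"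
proof -
  obtain Bh where Bh: "0 < Bh" "\<And>v. Bh \<le> norm v \<Longrightarrow> h v = 0"
      "\<And>v w. Bh \<le> norm v \<Longrightarrow> frechet_derivative h (at v) w = 0"
    using Cc_supp[OF Ch] by blast
  obtain Bg where Bg: "0 < Bg" "\<And>v. Bg \<le> norm v \<Longrightarrow> g v = 0"
      "\<And>v w. Bg \<le> norm v \<Longrightarrow> frechet_derivative g (at v) w = 0"
    using Cc_supp[OF Cg] by blast
  define B where "B = max Bh Bg"
  have hz: "\<And>v. B \<le> norm v \<Longrightarrow> h v = 0" using Bh(2) by (auto simp: B_def)
  have gz: "\<And>v. B \<le> norm v \<Longrightarrow> g v = 0" using Bg(2) by (auto simp: B_def)
  have Dhz: "\<And>v. B \<le> norm v \<Longrightarrow> Dd h u v = 0" using Bh(3) by (auto simp: B_def Dd_def)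
  have Dgz: "\<And>v. B \<le> norm v \<Longrightarrow> Dd g u v = 0" using Bg(3) by (auto simp: B_def Dd_def)
  have ch: "continuous_on UNIV h" by (rule Cc_basic(1)[OF Ch])
  have cg: "continuous_on UNIV g" by (rule Cc_basic(1)[OF Cg])
  have cDh: "continuous_on UNIV (Dd h u)" by (rule Dd_cont[OF Ch])
  have cDg: "continuous_on UNIV (Dd g u)" by (rule Dd_cont[OF Cg])
  have dh: "\<And>v. h differentiable (at v)" by (rule Cc_basic(2)[OF Ch])
  have dg: "\<And>v. g differentiable (at v)" by (rule Cc_basic(2)[OF Cg])
  define f where "f w = cnj (h w) * g w / (complex_of_real \<delta> + \<i> * complex_of_real (u \<bullet> w))" for w
  have den: "complex_of_real \<delta> + \<i> * complex_of_real t \<noteq> 0" for t using \<delta> by (simp add: complex_eq_iff)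
  have cf: "continuous_on UNIV f" unfolding f_def
    by (intro continuous_intros ch cg) (use den in auto)
  have fz: "\<And>w. B \<le> norm w \<Longrightarrow> f w = 0" using hz by (simp add: f_def)
  have fi: "integrable lborel f" by (rule cs_int_a[OF cf fz])
  define xAh where "xAh w = cmod (h w) * cmod (Dd h u w)" for w
  define xAg where "xAg w = cmod (g w) * cmod (Dd g u w)" for w
  define xgg where "xgg w = (cmod (g w))^2" for w
  define xhh where "xhh w = (cmod (h w))^2" for w
  define xDg where "xDg w = (cmod (Dd g u w))^2" for w
  define xDh where "xDh w = (cmod (Dd h u w))^2" for w
  have cx: "continuous_on UNIV xAh" "continuous_on UNIV xAg" "continuous_on UNIV xgg"
       "continuous_on UNIV xhh" "continuous_on UNIV xDg" "continuous_on UNIV xDh"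
    unfolding xAh_def xAg_def xgg_def xhh_def xDg_def xDh_def
    by (intro continuous_intros ch cg cDh cDg)+
  have zx: "\<And>w. B \<le> norm w \<Longrightarrow> xAh w = 0" "\<And>w. B \<le> norm w \<Longrightarrow> xAg w = 0"
     "\<And>w. B \<le> norm w \<Longrightarrow> xgg w = 0" "\<And>w. B \<le> norm w \<Longrightarrow> xhh w = 0"
     "\<And>w. B \<le> norm w \<Longrightarrow> xDg w = 0" "\<And>w. B \<le> norm w \<Longrightarrow> xDh w = 0"
    unfolding xAh_def xAg_def xgg_def xhh_def xDg_def xDh_def using hz gz Dhz Dgz by auto
  have nx: "\<And>w. 0 \<le> xAh w" "\<And>w. 0 \<le> xAg w" "\<And>w. 0 \<le> xgg w" "\<And>w. 0 \<le> xhh w"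
     "\<And>w. 0 \<le> xDg w" "\<And>w. 0 \<le> xDh w"
    unfolding xAh_def xAg_def xgg_def xhh_def xDg_def xDh_def by auto
  define L where "L x v = (\<integral>s. x (pt u v + s *\<^sub>R u) \<partial>lborel)" for x :: "'a \<Rightarrow> real" and v
  define F where "F x v = indicator {0..1} (u \<bullet> v) * sqrt (L x v)" for x :: "'a \<Rightarrow> real" and v
  define J where "J x = (\<integral>w. x w \<partial>lborel)" for x :: "'a \<Rightarrow> real"
  have SL: "F x \<in> borel_measurable lborel \<and> (\<forall>v. 0 \<le> F x v) \<and> integrable lborel (\<lambda>v. (F x v)^2)
      \<and> (\<integral>v. (F x v)^2 \<partial>lborel) = J x"
    if "continuous_on UNIV x" "\<And>w. B \<le> norm w \<Longrightarrow> x w = 0" "\<And>w. 0 \<le> x w" for x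
    using slab_line[OF that(1) that(2) u that(3)] unfolding F_def L_def J_def by blast
  have CS: "integrable lborel (\<lambda>v. F x v * F y v) \<and> (\<integral>v. F x v * F y v \<partial>lborel) \<le> sqrt (J x) * sqrt (J y)"
    if "continuous_on UNIV x" "\<And>w. B \<le> norm w \<Longrightarrow> x w = 0" "\<And>w. 0 \<le> x w"
       "continuous_on UNIV y" "\<And>w. B \<le> norm w \<Longrightarrow> y w = 0" "\<And>w. 0 \<le> y w" for x y
  proof -
    have a: "F x \<in> borel_measurable lborel" "\<And>v. 0 \<le> F x v" "integrable lborel (\<lambda>v. (F x v)^2)"
      "(\<integral>v. (F x v)^2 \<partial>lborel) = J x" using SL[OF that(1-3)] by auto
    have b: "F y \<in> borel_measurable lborel" "\<And>v. 0 \<le> F y v" "integrable lborel (\<lambda>v. (F y v)^2)"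
      "(\<integral>v. (F y v)^2 \<partial>lborel) = J y" using SL[OF that(4-6)] by auto
    show ?thesis using int_cs[OF a(1) b(1) a(2) b(2) a(3) b(3)] a(4) b(4) by simp
  qed
  note C1 = CS[OF cx(1) zx(1) nx(1) cx(2) zx(2) nx(2)]
  note C2 = CS[OF cx(1) zx(1) nx(1) cx(3) zx(3) nx(3)]
  note C3 = CS[OF cx(1) zx(1) nx(1) cx(5) zx(5) nx(5)]
  note C4 = CS[OF cx(2) zx(2) nx(2) cx(6) zx(6) nx(6)]
  define I where "I v = (\<integral>s. f (v + (s - u \<bullet> v) *\<^sub>R u) \<partial>lborel)" for v
  have Iv: "indicator {0..1} (u \<bullet> v) * cmod (I v) \<le> 8 * (F xAh v * F xAg v) + (2 * sqrt 2 / \<rho>) * (F xAh v * F xgg v)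
      + 3 * sqrt 2 * \<rho> * (F xAh v * F xDg v + F xAg v * F xDh v)" if \<rho>: "0 < \<rho>" for v \<rho>
  proof -
    define p where "p = pt u v"
    define M where "M = B + norm p"
    have sl: "\<And>s. M \<le> \<bar>s\<bar> \<Longrightarrow> B \<le> norm (p + s *\<^sub>R u)" using line_supp[OF u] by (simp add: M_def)
    have dH: "\<And>s. ((\<lambda>s. h (p + s *\<^sub>R u)) has_vector_derivative Dd h u (p + s *\<^sub>R u)) (at s)"
      by (rule line_deriv[OF dh])
    have dG: "\<And>s. ((\<lambda>s. g (p + s *\<^sub>R u)) has_vector_derivative Dd g u (p + s *\<^sub>R u)) (at s)"
      by (rule line_deriv[OF dg])
    have cH': "continuous_on UNIV (\<lambda>s. Dd h u (p + s *\<^sub>R u))"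
      by (rule continuous_on_compose2[OF cDh]) (auto intro!: continuous_intros)
    have cG': "continuous_on UNIV (\<lambda>s. Dd g u (p + s *\<^sub>R u))"
      by (rule continuous_on_compose2[OF cDg]) (auto intro!: continuous_intros)
    have sH: "\<And>s. M \<le> \<bar>s\<bar> \<Longrightarrow> h (p + s *\<^sub>R u) = 0" using hz[OF sl] by simp
    have sG: "\<And>s. M \<le> \<bar>s\<bar> \<Longrightarrow> g (p + s *\<^sub>R u) = 0" using gz[OF sl] by simp
    have sH': "\<And>s. M \<le> \<bar>s\<bar> \<Longrightarrow> Dd h u (p + s *\<^sub>R u) = 0" using Dhz[OF sl] by simp
    have sG': "\<And>s. M \<le> \<bar>s\<bar> \<Longrightarrow> Dd g u (p + s *\<^sub>R u) = 0" using Dgz[OF sl] by simp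
    note R1 = oneD_hk[OF dH dG cH' cG' sH sG sH' sG' \<delta> \<rho>]
    have e1: "integral UNIV (\<lambda>x. cmod (h (p + x *\<^sub>R u)) * cmod (Dd h u (p + x *\<^sub>R u))) = L xAh v"
      using line_HK(2)[OF cx(1) zx(1) u, where p=p] by (simp add: L_def xAh_def p_def)
    have e2: "integral UNIV (\<lambda>x. cmod (g (p + x *\<^sub>R u)) * cmod (Dd g u (p + x *\<^sub>R u))) = L xAg v"
      using line_HK(2)[OF cx(2) zx(2) u, where p=p] by (simp add: L_def xAg_def p_def)
    have e3: "integral UNIV (\<lambda>x. (cmod (g (p + x *\<^sub>R u)))^2) = L xgg v"
      using line_HK(2)[OF cx(3) zx(3) u, where p=p] by (simp add: L_def xgg_def p_def)
    have e4: "integral UNIV (\<lambda>x. (cmod (Dd g u (p + x *\<^sub>R u)))^2) = L xDg v"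
      using line_HK(2)[OF cx(5) zx(5) u, where p=p] by (simp add: L_def xDg_def p_def)
    have e5: "integral UNIV (\<lambda>x. (cmod (Dd h u (p + x *\<^sub>R u)))^2) = L xDh v"
      using line_HK(2)[OF cx(6) zx(6) u, where p=p] by (simp add: L_def xDh_def p_def)
    have eI: "integral UNIV (\<lambda>s. cnj (h (p + s *\<^sub>R u)) * g (p + s *\<^sub>R u) / (complex_of_real \<delta> + \<i> * complex_of_real s)) = I v"
    proof -
      have "I v = (\<integral>s. f (p + s *\<^sub>R u) \<partial>lborel)" by (simp add: I_def lp_pt p_def)
      also have "\<dots> = integral UNIV (\<lambda>s. f (p + s *\<^sub>R u))" by (rule line_HK(2)[OF cf fz u, symmetric])
      also have "\<dots> = integral UNIV (\<lambda>s. cnj (h (p + s *\<^sub>R u)) * g (p + s *\<^sub>R u) / (complex_of_real \<delta> + \<i> * complex_of_real s))"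
        by (simp add: f_def p_def inner_pt[OF u])
      finally show ?thesis by simp
    qed
    have R2: "cmod (I v) \<le> 4 * sqrt (2 * L xAh v) * sqrt (2 * L xAg v) + 2 * sqrt (2 * L xAh v) * sqrt (L xgg v) / \<rho>
        + 3 * \<rho> * (sqrt (2 * L xAh v) * sqrt (L xDg v) + sqrt (2 * L xAg v) * sqrt (L xDh v))"
      using R1 unfolding e1 e2 e3 e4 e5 eI .
    show ?thesis
    proof (cases "u \<bullet> v \<in> {0..1}")
      case True
      have "4 * sqrt (2 * L xAh v) * sqrt (2 * L xAg v) + 2 * sqrt (2 * L xAh v) * sqrt (L xgg v) / \<rho>
        + 3 * \<rho> * (sqrt (2 * L xAh v) * sqrt (L xDg v) + sqrt (2 * L xAg v) * sqrt (L xDh v))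
        = 8 * (F xAh v * F xAg v) + (2 * sqrt 2 / \<rho>) * (F xAh v * F xgg v)
          + 3 * sqrt 2 * \<rho> * (F xAh v * F xDg v + F xAg v * F xDh v)"
        using True by (simp add: F_def real_sqrt_mult algebra_simps)
      thus ?thesis using R2 True by simp
    next
      case False
      have "0 \<le> 8 * (F xAh v * F xAg v) + (2 * sqrt 2 / \<rho>) * (F xAh v * F xgg v)
          + 3 * sqrt 2 * \<rho> * (F xAh v * F xDg v + F xAg v * F xDh v)"
        using False by (simp add: F_def)
      thus ?thesis using False by simp
    qed
  qed
  have P: "(\<integral>w. f w \<partial>lborel) = (\<integral>v. indicator {0..1} (u \<bullet> v) *\<^sub>R I v \<partial>lborel)"
    unfolding I_def by (rule slab(2)[OF u fi])
  have iI: "integrable lborel (\<lambda>v. indicator {0..1} (u \<bullet> v) *\<^sub>R I v)"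
    unfolding I_def by (rule slab(1)[OF u fi])
  have nrm: "(\<lambda>v. norm (indicator {0..1} (u \<bullet> v) *\<^sub>R I v)) = (\<lambda>v. indicator {0..1} (u \<bullet> v) * cmod (I v))"
    by (rule ext) (simp add: indicator_def)
  have nI: "integrable lborel (\<lambda>v. indicator {0..1} (u \<bullet> v) * cmod (I v))"
    using integrable_norm[OF iI] unfolding nrm .
  have X1: "cmod (\<integral>w. f w \<partial>lborel) \<le> (\<integral>v. indicator {0..1} (u \<bullet> v) * cmod (I v) \<partial>lborel)"
    unfolding P using integral_norm_bound[of lborel "\<lambda>v. indicator {0..1} (u \<bullet> v) *\<^sub>R I v"] unfolding nrm .
  have X\<rho>: "cmod (\<integral>w. f w \<partial>lborel) \<le> 8 * sqrt (J xAh) * sqrt (J xAg) + (2 * sqrt 2 / \<rho>) * sqrt (J xAh) * sqrt (J xgg)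
      + 3 * sqrt 2 * \<rho> * (sqrt (J xAh) * sqrt (J xDg) + sqrt (J xAg) * sqrt (J xDh))" if \<rho>: "0 < \<rho>" for \<rho>
  proof -
    define c2 where "c2 = 2 * sqrt 2 / \<rho>"
    define c3 where "c3 = 3 * sqrt 2 * \<rho>"
    have c2: "0 \<le> c2" and c3: "0 \<le> c3" using \<rho> by (auto simp: c2_def c3_def)
    have iR: "integrable lborel (\<lambda>v. 8 * (F xAh v * F xAg v) + c2 * (F xAh v * F xgg v)
      + c3 * (F xAh v * F xDg v + F xAg v * F xDh v))"
      using C1 C2 C3 C4 by auto
    have "(\<integral>v. indicator {0..1} (u \<bullet> v) * cmod (I v) \<partial>lborel) \<le> (\<integral>v. 8 * (F xAh v * F xAg v) + c2 * (F xAh v * F xgg v)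
      + c3 * (F xAh v * F xDg v + F xAg v * F xDh v) \<partial>lborel)"
      using nI iR Iv[OF \<rho>] unfolding c2_def c3_def by (intro integral_mono) auto
    also have "\<dots> = 8 * (\<integral>v. F xAh v * F xAg v \<partial>lborel) + c2 * (\<integral>v. F xAh v * F xgg v \<partial>lborel)
      + c3 * ((\<integral>v. F xAh v * F xDg v \<partial>lborel) + (\<integral>v. F xAg v * F xDh v \<partial>lborel))"
      using C1 C2 C3 C4 by simp
    also have "\<dots> \<le> 8 * (sqrt (J xAh) * sqrt (J xAg)) + c2 * (sqrt (J xAh) * sqrt (J xgg))
      + c3 * ((sqrt (J xAh) * sqrt (J xDg)) + (sqrt (J xAg) * sqrt (J xDh)))"
      using C1 C2 C3 C4 c2 c3 by (intro add_mono mult_left_mono) auto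
    finally show ?thesis using X1 unfolding c2_def c3_def by (simp add: algebra_simps)
  qed
  have ih: "integrable lborel xhh" by (rule cs_int_a[OF cx(4) zx(4)])
  have ig: "integrable lborel xgg" by (rule cs_int_a[OF cx(3) zx(3)])
  have iDh: "integrable lborel xDh" by (rule cs_int_a[OF cx(6) zx(6)])
  have iDg: "integrable lborel xDg" by (rule cs_int_a[OF cx(5) zx(5)])
  have JA: "J xAh \<le> sqrt (J xhh) * sqrt (J xDh)"
  proof -
    have "(\<integral>w. cmod (h w) * cmod (Dd h u w) \<partial>lborel) \<le> sqrt (\<integral>w. (cmod (h w))^2 \<partial>lborel) * sqrt (\<integral>w. (cmod (Dd h u w))^2 \<partial>lborel)"
      by (rule int_cs(2)) (use ih[unfolded xhh_def] iDh[unfolded xDh_def] in \<open>auto intro: borel_measurable_continuous_onI continuous_intros ch cDh\<close>)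
    thus ?thesis by (simp add: J_def xAh_def xhh_def xDh_def)
  qed
  have JG: "J xAg \<le> sqrt (J xgg) * sqrt (J xDg)"
  proof -
    have "(\<integral>w. cmod (g w) * cmod (Dd g u w) \<partial>lborel) \<le> sqrt (\<integral>w. (cmod (g w))^2 \<partial>lborel) * sqrt (\<integral>w. (cmod (Dd g u w))^2 \<partial>lborel)"
      by (rule int_cs(2)) (use ig[unfolded xgg_def] iDg[unfolded xDg_def] in \<open>auto intro: borel_measurable_continuous_onI continuous_intros cg cDg\<close>)
    thus ?thesis by (simp add: J_def xAg_def xgg_def xDg_def)
  qed
  have JA0: "0 \<le> J xAh" unfolding J_def by (rule Bochner_Integration.integral_nonneg) (simp add: nx)
  have JG0: "0 \<le> J xAg" unfolding J_def by (rule Bochner_Integration.integral_nonneg) (simp add: nx)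
  have fin: "cmod (\<integral>w. f w \<partial>lborel) \<le> 10 * (sqrt (J xDh) * sqrt (J xgg) + sqrt (J xhh) * sqrt (J xDg))"
  proof (rule final_alg[where JA = "J xAh" and JG = "J xAg"])
    show "0 \<le> sqrt (J xhh)" "0 \<le> sqrt (J xDh)" "0 \<le> sqrt (J xgg)" "0 \<le> sqrt (J xDg)"
      unfolding J_def by (auto intro!: Bochner_Integration.integral_nonneg simp: nx)
  qed (use JA JG JA0 JG0 X\<rho> in auto)
  thus ?thesis by (simp add: f_def J_def xDh_def xgg_def xhh_def xDg_def)
qed


lemma grad_ge:
  fixes f :: "'a::euclidean_space \<Rightarrow> complex"
  assumes Cf: "Cc_inf f" and u: "norm u = 1"
  shows "sqrt (\<integral>w. (cmod (Dd f u w))^2 \<partial>lborel) \<le> grad_L2norm f"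
proof -
  obtain B where B: "0 < B" "\<And>v. B \<le> norm v \<Longrightarrow> f v = 0"
      "\<And>v w. B \<le> norm v \<Longrightarrow> frechet_derivative f (at v) w = 0"
    using Cc_supp[OF Cf] by blast
  have c1: "continuous_on UNIV (\<lambda>w. (cmod (Dd f u w))^2)"
    by (intro continuous_intros Dd_cont[OF Cf])
  have c2: "continuous_on UNIV (\<lambda>w. \<Sum>b\<in>Basis. (cmod (partial_deriv f b w))^2)"
    by (intro continuous_intros Cc_basic(3)[OF Cf]) auto
  have i1: "integrable lborel (\<lambda>w. (cmod (Dd f u w))^2)"
    by (rule cs_int_a[OF c1, of B]) (simp add: Dd_def B(3))
  have i2: "integrable lborel (\<lambda>w. \<Sum>b\<in>Basis. (cmod (partial_deriv f b w))^2)"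
    by (rule cs_int_a[OF c2, of B]) (simp add: partial_deriv_def B(3))
  have "(\<integral>w. (cmod (Dd f u w))^2 \<partial>lborel) \<le> (\<integral>w. (\<Sum>b\<in>Basis. (cmod (partial_deriv f b w))^2) \<partial>lborel)"
    by (rule integral_mono[OF i1 i2]) (rule Dd_bound[OF Cc_basic(2)[OF Cf] u])
  thus ?thesis unfolding grad_L2norm_def by simp
qed

theorem lemma4p6:
  "\<exists>C::real. \<forall>(g::'a::euclidean_space \<Rightarrow> complex) h (k::'a) (\<epsilon>::real).
      Cc_inf g \<longrightarrow> Cc_inf h \<longrightarrow> k \<noteq> 0 \<longrightarrow> \<epsilon> > 0 \<longrightarrow>
      cmod (resolvent_pairing h \<epsilon> k g)
        \<le> C / norm k * (H1norm h * L2norm g + L2norm h * grad_L2norm g)"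
proof (intro exI allI impI)
  fix g h :: "'a \<Rightarrow> complex" and k :: 'a and \<epsilon> :: real
  assume Cg: "Cc_inf g" and Ch: "Cc_inf h" and k: "k \<noteq> 0" and \<epsilon>: "\<epsilon> > 0"
  define lam where "lam = norm k"
  have lam: "0 < lam" using k by (simp add: lam_def)
  define u where "u = (1/lam) *\<^sub>R k"
  have u: "norm u = 1" using lam by (simp add: u_def lam_def)
  define \<delta> where "\<delta> = \<epsilon> / lam"
  have \<delta>: "0 < \<delta>" using lam \<epsilon> by (simp add: \<delta>_def)
  have pw: "cnj (h v) * g v / (complex_of_real \<epsilon> + \<i> * complex_of_real (k \<bullet> v))
      = complex_of_real (1/lam) * (cnj (h v) * g v / (complex_of_real \<delta> + \<i> * complex_of_real (u \<bullet> v)))" for v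
  proof -
    have "complex_of_real \<epsilon> + \<i> * complex_of_real (k \<bullet> v) = complex_of_real lam * (complex_of_real \<delta> + \<i> * complex_of_real (u \<bullet> v))"
      using lam by (simp add: \<delta>_def u_def complex_eq_iff)
    thus ?thesis using lam by simp
  qed
  have "resolvent_pairing h \<epsilon> k g = complex_of_real (1/lam) * (\<integral>v. cnj (h v) * g v / (complex_of_real \<delta> + \<i> * complex_of_real (u \<bullet> v)) \<partial>lborel)"
    unfolding resolvent_pairing_def pw by (rule integral_mult_right_zero)
  hence "cmod (resolvent_pairing h \<epsilon> k g) = (1/lam) * cmod (\<integral>v. cnj (h v) * g v / (complex_of_real \<delta> + \<i> * complex_of_real (u \<bullet> v)) \<partial>lborel)"
    using lam by (simp add: norm_mult norm_divide)
  also have "\<dots> \<le> (1/lam) * (10 * (sqrt (\<integral>w. (cmod (Dd h u w))^2 \<partial>lborel) * sqrt (\<integral>w. (cmod (g w))^2 \<partial>lborel)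
           + sqrt (\<integral>w. (cmod (h w))^2 \<partial>lborel) * sqrt (\<integral>w. (cmod (Dd g u w))^2 \<partial>lborel)))"
    using lam by (intro mult_left_mono main_bound[OF Ch Cg u \<delta>]) auto
  also have "\<dots> \<le> (1/lam) * (10 * (H1norm h * L2norm g + L2norm h * grad_L2norm g))"
  proof -
    have a0: "0 \<le> L2norm h" and b0: "0 \<le> L2norm g" unfolding L2norm_def by auto
    have gh: "sqrt (\<integral>w. (cmod (Dd h u w))^2 \<partial>lborel) \<le> H1norm h"
    proof -
      have "sqrt (\<integral>w. (cmod (Dd h u w))^2 \<partial>lborel) \<le> grad_L2norm h" by (rule grad_ge[OF Ch u])
      also have "grad_L2norm h = sqrt ((grad_L2norm h)^2)"
        unfolding grad_L2norm_def by (simp add: sum_nonneg)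
      also have "\<dots> \<le> H1norm h" unfolding H1norm_def by simp
      finally show ?thesis .
    qed
    have gg: "sqrt (\<integral>w. (cmod (Dd g u w))^2 \<partial>lborel) \<le> grad_L2norm g" by (rule grad_ge[OF Cg u])
    have "sqrt (\<integral>w. (cmod (Dd h u w))^2 \<partial>lborel) * sqrt (\<integral>w. (cmod (g w))^2 \<partial>lborel)
        + sqrt (\<integral>w. (cmod (h w))^2 \<partial>lborel) * sqrt (\<integral>w. (cmod (Dd g u w))^2 \<partial>lborel)
        \<le> H1norm h * L2norm g + L2norm h * grad_L2norm g"
      using a0 b0 gh gg unfolding L2norm_def by (intro add_mono mult_right_mono mult_left_mono) auto
    thus ?thesis using lam by (intro mult_left_mono) auto
  qed
  also have "\<dots> = 10 / norm k * (H1norm h * L2norm g + L2norm h * grad_L2norm g)"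
    by (simp add: lam_def)
  finally show "cmod (resolvent_pairing h \<epsilon> k g) \<le> 10 / norm k * (H1norm h * L2norm g + L2norm h * grad_L2norm g)" .
qed

end
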